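(* Let $S\subset\mathbb{R}^p$ be a compact set with $\mathrm{cl}(\mathrm{int}(S))=S$. Let $w:\mathrm{int}(S)\to[w_-,+\infty)$ be integrable on $\mathrm{int}(S)$ with $w_->0$, and let $\mu$ be the measure defined by $\mu(A)=\int_{A\cap S}w(\mathbf{x})\,d\mathbf{x}$ for measurable $A$, with $\mu(S)=1$. Let $(\delta_k)_{k\in\mathbb{N}}$ be a decreasing sequence of positive numbers converging to $0$. For every $k$, let $d_k$ be the smallest positive integer such that \[2^{3-\frac{\delta_k d_k}{\delta_k+\mathrm{diam}(S)}}\,d_k^p\left(\frac{e}{p}\right)^p\exp\left(\frac{p^2}{d_k}\right)\le\alpha_k,\qquad\text{where}\quad \alpha_k:=w_-\,\delta_k^p\,\omega_p\,\frac{(d_k+1)(d_k+2)(d_k+3)}{(d_k+p+1)(d_k+p+2)(2d_k+p+6)}.\] For every $k$ let $S_k=\{\mathbf{x}\in\mathbb{R}^p:\ s(d_k)\,\Lambda_{\mu,d_k}(\mathbf{x})\ge\alpha_k\}$. Then, as $k\to\infty$, $d_H(S_k,S)\to0$ and $d_H(\partial S_k,\partial S)\to0$.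
   Context: $\mathrm{diam}(S)$ is the diameter of $S$, $\omega_p=\frac{2\pi^{(p+1)/2}}{\Gamma((p+1)/2)}$, and $s(d)=\binom{p+d}{d}$. For a finite Borel measure $\nu$ on $\mathbb{R}^p$ with finite moments and $d\in\mathbb{N}$, the Christoffel function is $\Lambda_{\nu,d}(\xi)=\min\{\int P^2\,d\nu: P\in\mathbb{R}[X]_d,\ P(\xi)=1\}$, where $\mathbb{R}[X]_d$ is the space of real polynomials in $p$ variables of total degree at most $d$. $\partial A$ is the topological boundary of $A$, and $d_H(X,Y)=\max\{\sup_{\mathbf{x}\in X}\inf_{\mathbf{y}\in Y}\|\mathbf{x}-\mathbf{y}\|,\ \sup_{\mathbf{y}\in Y}\inf_{\mathbf{x}\in X}\|\mathbf{x}-\mathbf{y}\|\}$ is the Hausdorff distance. *)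

theory Defs
  imports "HOL-Analysis.Analysis"
begin

definition exps :: "nat \<Rightarrow> ('n::finite \<Rightarrow> nat) set" where
  "exps d = {a. (\<Sum>i\<in>UNIV. a i) \<le> d}"

text \<open>Real polynomials in p = CARD('n) variables of total degree at most d, as functions.\<close>
definition polys_deg :: "nat \<Rightarrow> (real^'n::finite \<Rightarrow> real) set" where
  "polys_deg d = {P. \<exists>c :: ('n \<Rightarrow> nat) \<Rightarrow> real.
       P = (\<lambda>x. \<Sum>a\<in>exps d. c a * (\<Prod>i\<in>UNIV. (x $ i) ^ (a i)))}"

definition christoffel :: "(real^'n::finite) measure \<Rightarrow> nat \<Rightarrow> real^'n \<Rightarrow> real" where
  "christoffel \<nu> d \<xi> = Inf {(\<integral>x. (P x)^2 \<partial>\<nu>) | P. P \<in> polys_deg d \<and> P \<xi> = 1}"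

definition omega :: "nat \<Rightarrow> real" where
  "omega p = 2 * pi powr ((real p + 1) / 2) / Gamma ((real p + 1) / 2)"

definition sdim :: "nat \<Rightarrow> nat \<Rightarrow> nat" where
  "sdim p d = (p + d) choose d"

definition hausdorff_dist :: "('a::metric_space) set \<Rightarrow> 'a set \<Rightarrow> real" where
  "hausdorff_dist X Y = max (SUP x\<in>X. infdist x Y) (SUP y\<in>Y. infdist y X)"

definition alpha_th :: "nat \<Rightarrow> real \<Rightarrow> real \<Rightarrow> nat \<Rightarrow> real" where
  "alpha_th p wm \<delta> d = wm * \<delta> ^ p * omega p *
     ((real d + 1) * (real d + 2) * (real d + 3)) /
     ((real d + real p + 1) * (real d + real p + 2) * (2 * real d + real p + 6))"

definition deg_cond :: "nat \<Rightarrow> real \<Rightarrow> real \<Rightarrow> real \<Rightarrow> nat \<Rightarrow> bool" where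
  "deg_cond p diamS wm \<delta> d \<longleftrightarrow>
     2 powr (3 - \<delta> * real d / (\<delta> + diamS)) * real d ^ p * (exp 1 / real p) ^ p
       * exp (real p ^ 2 / real d) \<le> alpha_th p wm \<delta> d"

end

theory Submission
  imports Defs "HOL-Computational_Algebra.Polynomial"
begin
definition mono_fn :: "('n::finite \<Rightarrow> nat) \<Rightarrow> real^'n \<Rightarrow> real" where
  "mono_fn a x = (\<Prod>i\<in>UNIV. (x $ i) ^ (a i))"

lemma finite_exps: "finite (exps d :: ('n::finite \<Rightarrow> nat) set)"
proof -
  have "exps d \<subseteq> (PiE UNIV (\<lambda>_::'n. {..d}))"
  proof
    fix a :: "'n \<Rightarrow> nat" assume "a \<in> exps d"
    then have s: "(\<Sum>i\<in>UNIV. a i) \<le> d" by (simp add: exps_def)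
    have "a i \<le> d" for i
      using member_le_sum[of i UNIV a] s by auto
    then show "a \<in> PiE UNIV (\<lambda>_. {..d})" by auto
  qed
  then show ?thesis by (rule finite_subset) (simp add: finite_PiE)
qed

lemma polys_deg_iff: "P \<in> polys_deg d \<longleftrightarrow> (\<exists>c. P = (\<lambda>x. \<Sum>a\<in>exps d. c a * mono_fn a x))"
  by (simp add: polys_deg_def mono_fn_def)

lemma polys_deg_mono_fn: "a \<in> exps d \<Longrightarrow> (\<lambda>x. k * mono_fn a x) \<in> polys_deg d"
  unfolding polys_deg_iff
proof (rule exI[of _ "\<lambda>b. if b = a then k else 0"], rule ext)
  fix x assume a: "a \<in> exps d"
  have "(\<Sum>b\<in>exps d. (if b = a then k else 0) * mono_fn b x) = (\<Sum>b\<in>exps d. if b = a then k * mono_fn b x else 0)"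
    by (rule sum.cong) auto
  also have "\<dots> = k * mono_fn a x" using a by (simp add: finite_exps)
  finally show "k * mono_fn a x = (\<Sum>b\<in>exps d. (if b = a then k else 0) * mono_fn b x)" by simp
qed

lemma polys_deg_zero: "(\<lambda>x. 0) \<in> polys_deg d"
  unfolding polys_deg_iff by (rule exI[of _ "\<lambda>b. 0"]) simp

lemma polys_deg_add: "P \<in> polys_deg d \<Longrightarrow> Q \<in> polys_deg d \<Longrightarrow> (\<lambda>x. P x + Q x) \<in> polys_deg d"
  unfolding polys_deg_iff
  apply (elim exE)
  subgoal for c c' by (rule exI[of _ "\<lambda>a. c a + c' a"]) (simp add: sum.distrib distrib_right)
  done

lemma polys_deg_cmult: "P \<in> polys_deg d \<Longrightarrow> (\<lambda>x. k * P x) \<in> polys_deg d"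
  unfolding polys_deg_iff
  apply (elim exE)
  subgoal for c by (rule exI[of _ "\<lambda>a. k * c a"]) (simp add: sum_distrib_left mult.assoc)
  done

lemma polys_deg_sum: "finite A \<Longrightarrow> (\<And>j. j \<in> A \<Longrightarrow> f j \<in> polys_deg d) \<Longrightarrow> (\<lambda>x. \<Sum>j\<in>A. f j x) \<in> polys_deg d"
  by (induction A rule: finite_induct) (auto intro: polys_deg_zero polys_deg_add)

lemma exps_mono: "d \<le> e \<Longrightarrow> exps d \<subseteq> exps e"
  by (auto simp: exps_def)

lemma polys_deg_mono: "P \<in> polys_deg d \<Longrightarrow> d \<le> e \<Longrightarrow> P \<in> polys_deg e"
proof -
  assume "P \<in> polys_deg d" "d \<le> e"
  then obtain c where P: "P = (\<lambda>x. \<Sum>a\<in>exps d. c a * mono_fn a x)" by (auto simp: polys_deg_iff)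
  have "(\<lambda>x. \<Sum>a\<in>exps d. c a * mono_fn a x) \<in> polys_deg e"
    by (rule polys_deg_sum) (use exps_mono[OF \<open>d \<le> e\<close>] in \<open>auto intro!: polys_deg_mono_fn simp: finite_exps\<close>)
  then show ?thesis using P by simp
qed

lemma mono_fn_add: "mono_fn (\<lambda>i. a i + b i) x = mono_fn a x * mono_fn b x"
  by (simp add: mono_fn_def power_add prod.distrib)

lemma exps_add: "a \<in> exps d \<Longrightarrow> b \<in> exps e \<Longrightarrow> (\<lambda>i. a i + b i) \<in> exps (d + e)"
  by (auto simp: exps_def sum.distrib)

lemma polys_deg_mult: "P \<in> polys_deg d \<Longrightarrow> Q \<in> polys_deg e \<Longrightarrow> (\<lambda>x. P x * Q x) \<in> polys_deg (d + e)"
proof -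
  assume "P \<in> polys_deg d" "Q \<in> polys_deg e"
  then obtain c c' where P: "P = (\<lambda>x. \<Sum>a\<in>exps d. c a * mono_fn a x)"
     and Q: "Q = (\<lambda>x. \<Sum>b\<in>exps e. c' b * mono_fn b x)" by (auto simp: polys_deg_iff)
  have eq: "(\<lambda>x. P x * Q x) = (\<lambda>x. \<Sum>a\<in>exps d. \<Sum>b\<in>exps e. (c a * c' b) * mono_fn (\<lambda>i. a i + b i) x)"
    by (simp add: P Q sum_distrib_right sum_distrib_left mono_fn_add mult_ac)
  show ?thesis unfolding eq
    by (intro polys_deg_sum polys_deg_mono_fn exps_add) (auto simp: finite_exps)
qed

lemma polys_deg_const: "(\<lambda>x. k) \<in> polys_deg d"
proof -
  have "(\<lambda>x. k * mono_fn (\<lambda>_. 0) x) \<in> polys_deg d"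
    by (rule polys_deg_mono_fn) (simp add: exps_def)
  then show ?thesis by (simp add: mono_fn_def)
qed

lemma polys_deg_coord: "1 \<le> d \<Longrightarrow> (\<lambda>x. x $ i) \<in> polys_deg d"
proof -
  assume d: "1 \<le> d"
  have "(\<lambda>x. 1 * mono_fn (\<lambda>j. if j = i then 1 else 0) x) \<in> polys_deg d"
    by (rule polys_deg_mono_fn) (use d in \<open>simp add: exps_def\<close>)
  moreover have "mono_fn (\<lambda>j. if j = i then 1 else 0) x = x $ i" for x :: "real^'a"
  proof -
    have "(\<Prod>j\<in>UNIV. x$j ^ (if j = i then 1 else 0)) = (\<Prod>j\<in>UNIV. if j = i then x$j else 1)"
      by (rule prod.cong) auto
    then show ?thesis unfolding mono_fn_def by simp
  qed
  ultimately show ?thesis by simp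
qed

lemma polys_deg_power: "P \<in> polys_deg d \<Longrightarrow> (\<lambda>x. P x ^ m) \<in> polys_deg (d * m)"
proof (induction m)
  case 0 then show ?case using polys_deg_const[of 1 0] by simp
next
  case (Suc m)
  then have "(\<lambda>x. P x * P x ^ m) \<in> polys_deg (d + d * m)" by (intro polys_deg_mult)
  then show ?case by (simp add: algebra_simps)
qed

lemma polys_deg_continuous: "P \<in> polys_deg d \<Longrightarrow> continuous_on UNIV P"
  unfolding polys_deg_iff mono_fn_def
  by (auto intro!: continuous_intros)

lemma polys_deg_line:
  fixes z v :: "real^'n::finite"
  assumes "P \<in> polys_deg d"
  shows "\<exists>q. degree q \<le> d \<and> (\<forall>t. P (z + t *\<^sub>R v) = poly q t)"
proof -
  obtain c where P: "P = (\<lambda>x. \<Sum>a\<in>exps d. c a * mono_fn a x)" using assms by (auto simp: polys_deg_iff)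
  define q where "q = (\<Sum>a\<in>(exps d :: ('n \<Rightarrow> nat) set). [:c a:] * (\<Prod>i\<in>UNIV. [:z $ i, v $ i:] ^ (a i)))"
  have "degree q \<le> d" unfolding q_def
  proof (rule degree_sum_le)
    fix a :: "'n \<Rightarrow> nat" assume a: "a \<in> exps d"
    have "degree (\<Prod>i\<in>UNIV. [:z $ i, v $ i:] ^ (a i)) \<le> (\<Sum>i\<in>UNIV. degree ([:z $ i, v $ i:] ^ (a i)))"
      using degree_prod_sum_le[of UNIV "\<lambda>i. [:z $ i, v $ i:] ^ (a i)"] by (simp add: o_def)
    also have "\<dots> \<le> (\<Sum>i\<in>UNIV. a i)"
    proof (rule sum_mono)
      fix i
      have "degree ([:z $ i, v $ i:] ^ (a i)) \<le> degree [:z $ i, v $ i:] * a i" by (rule degree_power_le)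
      also have "\<dots> \<le> 1 * a i" by (intro mult_right_mono) (auto simp: degree_pCons_le)
      finally show "degree ([:z $ i, v $ i:] ^ (a i)) \<le> a i" by simp
    qed
    also have "\<dots> \<le> d" using a by (simp add: exps_def)
    finally show "degree ([:c a:] * (\<Prod>i\<in>UNIV. [:z $ i, v $ i:] ^ (a i))) \<le> d"
      using degree_mult_le[of "[:c a:]" "\<Prod>i\<in>UNIV. [:z $ i, v $ i:] ^ (a i)"] by simp
  qed (simp add: finite_exps)
  moreover have "P (z + t *\<^sub>R v) = poly q t" for t
    by (simp add: P q_def mono_fn_def poly_sum poly_prod algebra_simps)
  ultimately show ?thesis by blast
qed

definition Tsp :: "nat \<Rightarrow> (real \<Rightarrow> real) set" where
  "Tsp n = {f. \<exists>s. \<forall>t. f t = (\<Sum>j\<in>{1..n}. s j * sin (real j * t))}"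

lemma Tsp_zero: "(\<lambda>t. 0) \<in> Tsp n"
  unfolding Tsp_def by (rule CollectI, rule exI[of _ "\<lambda>_. 0"]) simp

lemma Tsp_add: "f \<in> Tsp n \<Longrightarrow> g \<in> Tsp n \<Longrightarrow> (\<lambda>t. f t + g t) \<in> Tsp n"
  unfolding Tsp_def
  apply clarify
  subgoal for s s' by (rule exI[of _ "\<lambda>j. s j + s' j"]) (simp add: sum.distrib distrib_right)
  done

lemma Tsp_cmult: "f \<in> Tsp n \<Longrightarrow> (\<lambda>t. c * f t) \<in> Tsp n"
  unfolding Tsp_def
  apply clarify
  subgoal for s by (rule exI[of _ "\<lambda>j. c * s j"]) (simp add: sum_distrib_left mult.assoc)
  done

lemma Tsp_sum: "finite A \<Longrightarrow> (\<And>i. i \<in> A \<Longrightarrow> f i \<in> Tsp n) \<Longrightarrow> (\<lambda>t. \<Sum>i\<in>A. f i t) \<in> Tsp n"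
  by (induction A rule: finite_induct) (auto intro: Tsp_zero Tsp_add)

lemma Tsp_single: "1 \<le> k \<Longrightarrow> k \<le> n \<Longrightarrow> (\<lambda>t. sin (real k * t)) \<in> Tsp n"
  unfolding Tsp_def
proof (rule CollectI, rule exI[of _ "\<lambda>j. if j = k then 1 else 0"], intro allI)
  fix t assume "1 \<le> k" "k \<le> n"
  have "(\<Sum>j\<in>{1..n}. (if j = k then 1 else 0) * sin (real j * t)) = (\<Sum>j\<in>{1..n}. if j = k then sin (real j * t) else 0)"
    by (rule sum.cong) auto
  also have "\<dots> = sin (real k * t)" using \<open>1 \<le> k\<close> \<open>k \<le> n\<close> by simp
  finally show "sin (real k * t) = (\<Sum>j\<in>{1..n}. (if j = k then 1 else 0) * sin (real j * t))" by simp
qed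

lemma Tsp_mono: "f \<in> Tsp n \<Longrightarrow> n \<le> m \<Longrightarrow> f \<in> Tsp m"
proof -
  assume "f \<in> Tsp n" "n \<le> m"
  then obtain s where f: "\<And>t. f t = (\<Sum>j\<in>{1..n}. s j * sin (real j * t))" by (auto simp: Tsp_def)
  have "(\<lambda>t. \<Sum>j\<in>{1..n}. s j * sin (real j * t)) \<in> Tsp m"
    by (intro Tsp_sum Tsp_cmult Tsp_single) (use \<open>n \<le> m\<close> in auto)
  moreover have "f = (\<lambda>t. \<Sum>j\<in>{1..n}. s j * sin (real j * t))" using f by (simp add: fun_eq_iff)
  ultimately show ?thesis by simp
qed

lemma sin_cos_prod: "sin (real j * t) * cos t = (sin (real (j+1) * t) + sin ((real j - 1) * t)) / 2"
  by (simp add: sin_add sin_diff algebra_simps)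

lemma Tsp_times_cos: "f \<in> Tsp n \<Longrightarrow> (\<lambda>t. f t * cos t) \<in> Tsp (n + 1)"
proof -
  assume "f \<in> Tsp n"
  then obtain s where f: "\<And>t. f t = (\<Sum>j\<in>{1..n}. s j * sin (real j * t))" by (auto simp: Tsp_def)
  have trm: "(\<lambda>t. s j * (sin (real j * t) * cos t)) \<in> Tsp (n+1)" if j: "j \<in> {1..n}" for j
  proof -
    have a: "(\<lambda>t. sin (real (j+1) * t)) \<in> Tsp (n+1)" using j by (intro Tsp_single) auto
    have b: "(\<lambda>t. sin ((real j - 1) * t)) \<in> Tsp (n+1)"
    proof (cases "j = 1")
      case True then show ?thesis using Tsp_zero by simp
    next
      case False
      then have "(\<lambda>t. sin (real (j - 1) * t)) \<in> Tsp (n+1)" using j by (intro Tsp_single) auto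
      then show ?thesis using j by (simp add: of_nat_diff)
    qed
    have "(\<lambda>t. (s j / 2) * (sin (real (j+1) * t) + sin ((real j - 1) * t))) \<in> Tsp (n+1)"
      by (intro Tsp_cmult Tsp_add a b)
    then show ?thesis by (simp add: sin_cos_prod)
  qed
  have "(\<lambda>t. \<Sum>j\<in>{1..n}. s j * (sin (real j * t) * cos t)) \<in> Tsp (n+1)"
    by (intro Tsp_sum trm) auto
  moreover have "(\<lambda>t. f t * cos t) = (\<lambda>t. \<Sum>j\<in>{1..n}. s j * (sin (real j * t) * cos t))"
    by (simp add: f sum_distrib_right mult.assoc)
  ultimately show ?thesis by simp
qed

lemma Tsp_cos_pow: "(\<lambda>t. cos t ^ k * sin t) \<in> Tsp (k + 1)"
proof (induction k)
  case 0 then show ?case using Tsp_single[of 1 1] by simp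
next
  case (Suc k)
  from Tsp_times_cos[OF Suc] show ?case by (simp add: mult_ac)
qed

lemma Tsp_poly:
  assumes "degree q \<le> d"
  shows "(\<lambda>t. poly q (r * cos t) * sin t) \<in> Tsp (d + 1)"
proof -
  have "(\<lambda>t. \<Sum>k\<le>degree q. (coeff q k * r ^ k) * (cos t ^ k * sin t)) \<in> Tsp (d + 1)"
    by (intro Tsp_sum Tsp_cmult Tsp_mono[OF Tsp_cos_pow]) (use assms in auto)
  moreover have "poly q (r * cos t) * sin t = (\<Sum>k\<le>degree q. (coeff q k * r ^ k) * (cos t ^ k * sin t))" for t
    by (simp add: poly_altdef sum_distrib_right sum_distrib_left power_mult_distrib mult_ac)
  ultimately show ?thesis by simp
qed

lemma sin_sin_integral:
  fixes j l :: nat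
  assumes "1 \<le> j" "1 \<le> l"
  shows "((\<lambda>t. sin (real j * t) * sin (real l * t)) has_integral (if j = l then pi / 2 else 0)) {0..pi}"
proof (cases "j = l")
  case True
  let ?F = "\<lambda>t. t / 2 - sin (2 * real j * t) / (4 * real j)"
  have "((\<lambda>t. sin (real j * t) * sin (real l * t)) has_integral (?F pi - ?F 0)) {0..pi}"
  proof (rule fundamental_theorem_of_calculus)
    show "0 \<le> pi" by simp
    fix t assume "t \<in> {0..pi}"
    have "(?F has_real_derivative (1/2 - cos (2 * real j * t) * (2 * real j) / (4 * real j))) (at t)"
      by (auto intro!: derivative_eq_intros)
    moreover have "1/2 - cos (2 * real j * t) * (2 * real j) / (4 * real j) = sin (real j * t) * sin (real l * t)"
    proof -
      have c: "cos (2 * real j * t) = 1 - 2 * (sin (real j * t))\<^sup>2"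
        using cos_double_sin[of "real j * t"] by (simp add: mult.assoc)
      have "real j \<noteq> 0" using assms by simp
      then have e: "cos (2 * real j * t) * (2 * real j) / (4 * real j) = cos (2 * real j * t) / 2" by simp
      show ?thesis unfolding e c using True assms by (simp add: power2_eq_square field_simps)
    qed
    ultimately show "(?F has_vector_derivative sin (real j * t) * sin (real l * t)) (at t within {0..pi})"
      by (simp add: has_real_derivative_iff_has_vector_derivative[symmetric] has_field_derivative_at_within)
  qed
  moreover have "?F pi - ?F 0 = pi / 2"
  proof -
    have "sin (2 * real j * pi) = 0" using sin_npi[of "2 * j"] by (simp add: mult_ac)
    then show ?thesis by simp
  qed
  ultimately show ?thesis using True by simp
next
  case False
  let ?a = "real j - real l" and ?b = "real j + real l"
  have a0: "?a \<noteq> 0" using False by simp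
  have b0: "?b \<noteq> 0" using assms by simp
  let ?F = "\<lambda>t. sin (?a * t) / (2 * ?a) - sin (?b * t) / (2 * ?b)"
  have "((\<lambda>t. sin (real j * t) * sin (real l * t)) has_integral (?F pi - ?F 0)) {0..pi}"
  proof (rule fundamental_theorem_of_calculus)
    show "0 \<le> pi" by simp
    fix t assume "t \<in> {0..pi}"
    have "(?F has_real_derivative (cos (?a * t) * ?a / (2 * ?a) - cos (?b * t) * ?b / (2 * ?b))) (at t)"
      using a0 b0 by (auto intro!: derivative_eq_intros)
    moreover have "cos (?a * t) * ?a / (2 * ?a) - cos (?b * t) * ?b / (2 * ?b) = sin (real j * t) * sin (real l * t)"
    proof -
      have c1: "cos (?a * t) = cos (real j * t) * cos (real l * t) + sin (real j * t) * sin (real l * t)"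
        using cos_diff[of "real j * t" "real l * t"] by (simp add: left_diff_distrib)
      have c2: "cos (?b * t) = cos (real j * t) * cos (real l * t) - sin (real j * t) * sin (real l * t)"
        using cos_add[of "real j * t" "real l * t"] by (simp add: distrib_right)
      have e1: "cos (?a * t) * ?a / (2 * ?a) = cos (?a * t) / 2" using a0 by (simp only: mult.commute[of 2] divide_divide_eq_left[symmetric] nonzero_mult_div_cancel_right) simp
      have e2: "cos (?b * t) * ?b / (2 * ?b) = cos (?b * t) / 2" using b0 by (simp only: mult.commute[of 2] divide_divide_eq_left[symmetric] nonzero_mult_div_cancel_right) simp
      show ?thesis unfolding e1 e2 unfolding c1 c2 by (simp add: field_simps)
    qed
    ultimately show "(?F has_vector_derivative sin (real j * t) * sin (real l * t)) (at t within {0..pi})"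
      by (simp add: has_real_derivative_iff_has_vector_derivative[symmetric] has_field_derivative_at_within)
  qed
  moreover have "?F pi - ?F 0 = 0"
  proof -
    have "?a = of_int (int j - int l)" by simp
    then have "sin (?a * pi) = 0" by (metis sin_times_pi_eq_0 Ints_of_int)
    moreover have "sin (?b * pi) = 0" using sin_npi[of "j + l"] by simp
    ultimately show ?thesis by simp
  qed
  ultimately show ?thesis using False by simp
qed

lemma Tsp_bound:
  assumes f: "f \<in> Tsp n"
  shows "(f t0)\<^sup>2 \<le> (2 * real n / pi) * integral {0..pi} (\<lambda>t. (f t)\<^sup>2)"
    and "(\<lambda>t. (f t)\<^sup>2) integrable_on {0..pi}"
proof -
  obtain s where fs: "\<And>t. f t = (\<Sum>j\<in>{1..n}. s j * sin (real j * t))" using f by (auto simp: Tsp_def)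
  have sq: "(f t)\<^sup>2 = (\<Sum>j\<in>{1..n}. \<Sum>l\<in>{1..n}. (s j * s l) * (sin (real j * t) * sin (real l * t)))" for t
    by (simp add: fs power2_eq_square sum_product mult_ac)
  have hi: "((\<lambda>t. (f t)\<^sup>2) has_integral (\<Sum>j\<in>{1..n}. \<Sum>l\<in>{1..n}. (s j * s l) * (if j = l then pi / 2 else 0))) {0..pi}"
    unfolding sq
    by (intro has_integral_sum has_integral_mult_right sin_sin_integral) auto
  have "(\<Sum>j\<in>{1..n}. \<Sum>l\<in>{1..n}. (s j * s l) * (if j = l then pi / 2 else 0)) = (\<Sum>j\<in>{1..n}. (s j)\<^sup>2 * (pi / 2))"
  (is "?L = _") proof (rule sum.cong[OF refl])
    fix j assume "j \<in> {1..n}"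
    have "(\<Sum>l\<in>{1..n}. (s j * s l) * (if j = l then pi / 2 else 0)) = (\<Sum>l\<in>{1..n}. if j = l then (s j * s l) * (pi / 2) else 0)"
      by (rule sum.cong) auto
    also have "\<dots> = (s j)\<^sup>2 * (pi / 2)" using \<open>j \<in> {1..n}\<close> by (simp add: power2_eq_square)
    finally show "(\<Sum>l\<in>{1..n}. (s j * s l) * (if j = l then pi / 2 else 0)) = (s j)\<^sup>2 * (pi / 2)" .
  qed
  also have "\<dots> = (\<Sum>j\<in>{1..n}. (s j)\<^sup>2) * (pi / 2)" by (rule sum_distrib_right[symmetric])
  finally have eqL: "?L = (\<Sum>j\<in>{1..n}. (s j)\<^sup>2) * (pi / 2)" .
  have hi': "((\<lambda>t. (f t)\<^sup>2) has_integral (\<Sum>j\<in>{1..n}. (s j)\<^sup>2) * (pi / 2)) {0..pi}"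
    using hi unfolding eqL .
  then show "(\<lambda>t. (f t)\<^sup>2) integrable_on {0..pi}" by blast
  have "(f t0)\<^sup>2 = (\<Sum>j\<in>{1..n}. s j * sin (real j * t0))\<^sup>2" by (simp add: fs)
  also have "\<dots> \<le> (\<Sum>j\<in>{1..n}. (s j)\<^sup>2) * (\<Sum>j\<in>{1..n}. (sin (real j * t0))\<^sup>2)"
    by (rule Cauchy_Schwarz_ineq_sum)
  also have "\<dots> \<le> (\<Sum>j\<in>{1..n}. (s j)\<^sup>2) * (\<Sum>j\<in>{1..n}. 1)"
    by (intro mult_left_mono sum_mono sum_nonneg) (auto simp: abs_square_le_1 abs_sin_le_one)
  also have "\<dots> = (2 * real n / pi) * ((\<Sum>j\<in>{1..n}. (s j)\<^sup>2) * (pi / 2))" by simp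
  also have "\<dots> = (2 * real n / pi) * integral {0..pi} (\<lambda>t. (f t)\<^sup>2)"
    using hi' by (simp add: integral_unique)
  finally show "(f t0)\<^sup>2 \<le> (2 * real n / pi) * integral {0..pi} (\<lambda>t. (f t)\<^sup>2)" .
qed

lemma univ_bound:
  fixes q :: "real poly"
  assumes dq: "degree q \<le> d" and r: "r > 0"
  shows "ennreal (pi * r / (2 * (real d + 1)) * (poly q 0)\<^sup>2)
          \<le> (\<integral>\<^sup>+ t. ennreal ((poly q t)\<^sup>2) * indicator {-r..r} t \<partial>lborel)"
proof -
  define F where "F = (\<lambda>t. (poly q t)\<^sup>2)"
  define f where "f = (\<lambda>t. poly q (r * cos t) * sin t)"
  have fT: "f \<in> Tsp (d + 1)" unfolding f_def by (rule Tsp_poly[OF dq])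
  have f0: "f (pi / 2) = poly q 0" by (simp add: f_def)
  have contF: "continuous_on UNIV F" unfolding F_def by (intro continuous_intros)
  have sub: "((\<lambda>x. (- r * sin x) *\<^sub>R F (r * cos x)) has_integral
      (integral {r * cos 0..r * cos pi} F - integral {r * cos pi..r * cos 0} F)) {0..pi}"
  proof (rule has_integral_substitution_general[of "{}" 0 pi "\<lambda>x. r * cos x" "-r" r])
    show "(\<lambda>x. r * cos x) ` {0..pi} \<subseteq> {- r..r}"
    proof clarify
      fix x
      have "r * cos x \<le> r * 1" using r by (intro mult_left_mono) auto
      moreover have "r * (-1) \<le> r * cos x" using r by (intro mult_left_mono) auto
      ultimately show "r * cos x \<in> {-r..r}" by simp
    qed
    show "continuous_on {- r..r} F" using contF by (rule continuous_on_subset) auto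
    show "continuous_on {0..pi} (\<lambda>x. r * cos x)" by (intro continuous_intros)
    fix x assume "x \<in> {0..pi} - {}"
    show "((\<lambda>x. r * cos x) has_real_derivative (- r * sin x)) (at x within {0..pi})"
      by (auto intro!: derivative_eq_intros)
  qed auto
  have I0: "integral {r..-r} F = 0" using r by (simp add: integral_empty)
  from sub have sub': "((\<lambda>x. (- r) * (sin x * F (r * cos x))) has_integral (- integral {-r..r} F)) {0..pi}"
    using I0 by (simp add: mult.assoc)
  then have sub2: "((\<lambda>x. sin x * F (r * cos x)) has_integral (integral {-r..r} F / r)) {0..pi}"
    using has_integral_mult_right[OF sub', of "- 1 / r"] r by (simp add: field_simps)
  have intf: "(\<lambda>t. (f t)\<^sup>2) integrable_on {0..pi}" by (rule Tsp_bound(2)[OF fT])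
  have le1: "integral {0..pi} (\<lambda>t. (f t)\<^sup>2) \<le> integral {0..pi} (\<lambda>x. sin x * F (r * cos x))"
  proof (rule integral_le[OF intf])
    show "(\<lambda>x. sin x * F (r * cos x)) integrable_on {0..pi}" using sub2 by blast
    fix x :: real assume x: "x \<in> {0..pi}"
    then have s0: "0 \<le> sin x" by (auto intro: sin_ge_zero)
    have s1: "sin x \<le> 1" by simp
    have "(f x)\<^sup>2 = (sin x * sin x) * F (r * cos x)" by (simp add: f_def F_def power2_eq_square mult_ac)
    also have "\<dots> \<le> sin x * F (r * cos x)"
      using s0 s1 by (intro mult_right_mono) (auto simp: F_def mult_left_le)
    finally show "(f x)\<^sup>2 \<le> sin x * F (r * cos x)" .
  qed
  have "(poly q 0)\<^sup>2 \<le> (2 * real (d + 1) / pi) * integral {0..pi} (\<lambda>t. (f t)\<^sup>2)"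
    using Tsp_bound(1)[OF fT, of "pi/2"] f0 by simp
  also have "\<dots> \<le> (2 * real (d + 1) / pi) * (integral {-r..r} F / r)"
    using le1 integral_unique[OF sub2] by (intro mult_left_mono) auto
  finally have key: "(poly q 0)\<^sup>2 \<le> (2 * real (d + 1) / pi) * (integral {-r..r} F / r)" .
  have key2: "pi * r / (2 * (real d + 1)) * (poly q 0)\<^sup>2 \<le> integral {-r..r} F"
  proof -
    have "pi * r / (2 * (real d + 1)) * (poly q 0)\<^sup>2 \<le> pi * r / (2 * (real d + 1)) * ((2 * real (d + 1) / pi) * (integral {-r..r} F / r))"
      using key r by (intro mult_left_mono) auto
    also have "\<dots> = (pi * r / (2 * (real d + 1)) * (2 * real (d + 1) / pi) / r) * integral {-r..r} F"
      by (simp add: field_simps)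
    also have "pi * r / (2 * (real d + 1)) * (2 * real (d + 1) / pi) / r = 1"
    proof -
      have "pi * r * (real d + 1) > 0" using r pi_gt_zero by (intro mult_pos_pos) auto
      then show ?thesis by (simp add: field_simps)
    qed
    finally show ?thesis by simp
  qed
  have hasF: "(F has_integral integral {-r..r} F) {-r..r}"
    by (intro integrable_integral integrable_continuous_interval continuous_on_subset[OF contF]) auto
  have nn: "integral\<^sup>N lborel (\<lambda>x. indicator {-r..r} x * F x) = integral {-r..r} F"
    by (rule nn_integral_has_integral_lebesgue[OF _ hasF]) (simp add: F_def)
  have "(\<integral>\<^sup>+ t. ennreal ((poly q t)\<^sup>2) * indicator {-r..r} t \<partial>lborel) = integral\<^sup>N lborel (\<lambda>x. indicator {-r..r} x * F x)"
    by (intro nn_integral_cong) (auto simp: F_def indicator_def)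
  then show ?thesis using nn key2 by (simp add: ennreal_leI)
qed

lemma polys_deg_borel: "P \<in> polys_deg d \<Longrightarrow> P \<in> borel_measurable borel"
  by (intro borel_measurable_continuous_onI polys_deg_continuous)

lemma tensor_step:
  fixes P :: "real^'n::finite \<Rightarrow> real" and J :: "(real^'n) set"
  assumes P: "P \<in> polys_deg d" and r: "r > 0" and J: "finite J"
  shows "ennreal ((pi * r / (2 * (real d + 1))) ^ card J * (P y)\<^sup>2)
     \<le> (\<integral>\<^sup>+ f. ennreal ((P (y + (\<Sum>b\<in>J. f b *\<^sub>R b)))\<^sup>2) * (\<Prod>b\<in>J. indicator {-r..r} (f b)) \<partial>(Pi\<^sub>M J (\<lambda>_. lborel)))"
  using J
proof (induction J arbitrary: y rule: finite_induct)
  case empty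
  interpret product_sigma_finite "\<lambda>_. lborel :: real measure" by standard
  show ?case by (subst nn_integral_empty) auto
next
  case (insert i J)
  interpret product_sigma_finite "\<lambda>_. lborel :: real measure" by standard
  define c where "c = pi * r / (2 * (real d + 1))"
  have c0: "c \<ge> 0" using r unfolding c_def by (auto intro!: divide_nonneg_pos)
  have [measurable]: "P \<in> borel_measurable borel" by (rule polys_deg_borel[OF P])
  let ?G = "\<lambda>f. ennreal ((P (y + (\<Sum>b\<in>insert i J. f b *\<^sub>R b)))\<^sup>2) * (\<Prod>b\<in>insert i J. indicator {-r..r} (f b))"
  have ms: "(\<lambda>f. \<Sum>b\<in>insert i J. f b *\<^sub>R b) \<in> borel_measurable (Pi\<^sub>M (insert i J) (\<lambda>_. lborel))"
    by (intro borel_measurable_sum borel_measurable_scaleR measurable_component_singleton borel_measurable_const) auto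
  have mi: "(\<lambda>f. indicator {-r..r} (f b) :: ennreal) \<in> borel_measurable (Pi\<^sub>M (insert i J) (\<lambda>_. lborel))" if "b \<in> insert i J" for b
    using that by measurable
  have meas: "?G \<in> borel_measurable (Pi\<^sub>M (insert i J) (\<lambda>_. lborel))"
  proof (rule borel_measurable_times_ennreal)
    have "(\<lambda>z. ennreal ((P (y + z))\<^sup>2)) \<in> borel_measurable borel" by measurable
    then show "(\<lambda>f. ennreal ((P (y + (\<Sum>b\<in>insert i J. f b *\<^sub>R b)))\<^sup>2)) \<in> borel_measurable (Pi\<^sub>M (insert i J) (\<lambda>_. lborel))"
      using measurable_compose[OF ms] by blast
    show "(\<lambda>f. \<Prod>b\<in>insert i J. indicator {-r..r} (f b) :: ennreal) \<in> borel_measurable (Pi\<^sub>M (insert i J) (\<lambda>_. lborel))"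
      using mi by (intro borel_measurable_prod_ennreal) auto
  qed
  have eqG: "?G (x(i := t)) = ennreal ((P ((y + (\<Sum>b\<in>J. x b *\<^sub>R b)) + t *\<^sub>R i))\<^sup>2) * indicator {-r..r} t * (\<Prod>b\<in>J. indicator {-r..r} (x b))" for x t
  proof -
    have s1: "(\<Sum>b\<in>J. (x(i := t)) b *\<^sub>R b) = (\<Sum>b\<in>J. x b *\<^sub>R b)"
      using insert.hyps(2) by (intro sum.cong) auto
    have s2: "(\<Prod>b\<in>J. indicator {-r..r} ((x(i := t)) b) :: ennreal) = (\<Prod>b\<in>J. indicator {-r..r} (x b))"
      using insert.hyps(2) by (intro prod.cong) auto
    show ?thesis using insert.hyps s1 s2 by (simp add: algebra_simps mult.assoc)
  qed
  have inner: "ennreal c * (ennreal ((P (y + (\<Sum>b\<in>J. x b *\<^sub>R b)))\<^sup>2) * (\<Prod>b\<in>J. indicator {-r..r} (x b)))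
        \<le> (\<integral>\<^sup>+ t. ?G (x(i := t)) \<partial>lborel)" for x
  proof -
    obtain q where dq: "degree q \<le> d" and q: "\<And>t. P ((y + (\<Sum>b\<in>J. x b *\<^sub>R b)) + t *\<^sub>R i) = poly q t"
      using polys_deg_line[OF P] by blast
    have "ennreal (c * (poly q 0)\<^sup>2) \<le> (\<integral>\<^sup>+ t. ennreal ((poly q t)\<^sup>2) * indicator {-r..r} t \<partial>lborel)"
      unfolding c_def by (rule univ_bound[OF dq r])
    then have "ennreal (c * (poly q 0)\<^sup>2) * (\<Prod>b\<in>J. indicator {-r..r} (x b))
        \<le> (\<integral>\<^sup>+ t. ennreal ((poly q t)\<^sup>2) * indicator {-r..r} t \<partial>lborel) * (\<Prod>b\<in>J. indicator {-r..r} (x b))"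
      by (rule mult_right_mono) simp
    also have "\<dots> = (\<integral>\<^sup>+ t. ennreal ((poly q t)\<^sup>2) * indicator {-r..r} t * (\<Prod>b\<in>J. indicator {-r..r} (x b)) \<partial>lborel)"
    proof (rule nn_integral_multc[symmetric])
      have "(\<lambda>t. poly q t) \<in> borel_measurable borel"
        by (intro borel_measurable_continuous_onI continuous_intros)
      then show "(\<lambda>t. ennreal ((poly q t)\<^sup>2) * indicator {-r..r} t) \<in> borel_measurable lborel"
        by measurable
    qed
    also have "\<dots> = (\<integral>\<^sup>+ t. ?G (x(i := t)) \<partial>lborel)"
      by (rule nn_integral_cong, subst eqG, simp add: q)
    finally show ?thesis
      using q[of 0] c0 by (simp add: ennreal_mult mult.assoc)
  qed
  have "ennreal (c ^ card (insert i J) * (P y)\<^sup>2) = ennreal c * ennreal (c ^ card J * (P y)\<^sup>2)"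
    using insert.hyps c0 by (simp add: ennreal_mult[symmetric] mult.assoc)
  also have "\<dots> \<le> ennreal c * (\<integral>\<^sup>+ x. ennreal ((P (y + (\<Sum>b\<in>J. x b *\<^sub>R b)))\<^sup>2) * (\<Prod>b\<in>J. indicator {-r..r} (x b)) \<partial>(Pi\<^sub>M J (\<lambda>_. lborel)))"
    using insert.IH[of y] unfolding c_def by (rule mult_left_mono) simp
  also have "\<dots> = (\<integral>\<^sup>+ x. ennreal c * (ennreal ((P (y + (\<Sum>b\<in>J. x b *\<^sub>R b)))\<^sup>2) * (\<Prod>b\<in>J. indicator {-r..r} (x b))) \<partial>(Pi\<^sub>M J (\<lambda>_. lborel)))"
    by (rule nn_integral_cmult[symmetric]) measurable
  also have "\<dots> \<le> (\<integral>\<^sup>+ x. (\<integral>\<^sup>+ t. ?G (x(i := t)) \<partial>lborel) \<partial>(Pi\<^sub>M J (\<lambda>_. lborel)))"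
    by (intro nn_integral_mono inner)
  also have "\<dots> = integral\<^sup>N (Pi\<^sub>M (insert i J) (\<lambda>_. lborel)) ?G"
    by (rule product_nn_integral_insert[symmetric, OF insert.hyps(1,2) meas])
  finally show ?case unfolding c_def .
qed

definition cube0 :: "real \<Rightarrow> ('a::euclidean_space) set" where
  "cube0 r = {z. \<forall>b\<in>Basis. \<bar>z \<bullet> b\<bar> \<le> r}"

lemma cube_bound:
  fixes P :: "real^'n::finite \<Rightarrow> real"
  assumes P: "P \<in> polys_deg d" and r: "r > 0"
  shows "ennreal ((pi * r / (2 * (real d + 1))) ^ CARD('n) * (P y)\<^sup>2)
     \<le> (\<integral>\<^sup>+ z. ennreal ((P (y + z))\<^sup>2) * indicator (cube0 r) z \<partial>lborel)"
proof -
  have [measurable]: "P \<in> borel_measurable borel" by (rule polys_deg_borel[OF P])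
  have mc: "cube0 r \<in> sets (borel :: (real^'n) measure)"
  proof -
    have "cube0 r = (\<Inter>b\<in>Basis. {z :: real^'n. \<bar>z \<bullet> b\<bar> \<le> r})" by (auto simp: cube0_def)
    moreover have "closed (\<Inter>b\<in>Basis. {z :: real^'n. \<bar>z \<bullet> b\<bar> \<le> r})"
      by (intro closed_INT ballI closed_Collect_le continuous_intros)
    ultimately show ?thesis by (simp add: borel_closed)
  qed
  have ind: "indicator (cube0 r) (\<Sum>b\<in>Basis. f b *\<^sub>R b :: real^'n) = (\<Prod>b\<in>Basis. indicator {-r..r} (f b) :: ennreal)" for f
  proof -
    have "(\<Sum>b'\<in>Basis. f b' *\<^sub>R b' :: real^'n) \<bullet> b = f b" if "b \<in> Basis" for b
      using that by (simp add: inner_sum_left inner_Basis if_distrib[of "\<lambda>x. _ * x"] cong: if_cong)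
    then have e: "(\<Sum>b\<in>Basis. f b *\<^sub>R b :: real^'n) \<in> cube0 r \<longleftrightarrow> (\<forall>b\<in>Basis. f b \<in> {-r..r})"
      by (auto simp: cube0_def abs_le_iff)
    show ?thesis
    proof (cases "\<forall>b\<in>Basis. f b \<in> {-r..r}")
      case True then show ?thesis using e by (simp add: indicator_def)
    next
      case False
      then obtain b where "b \<in> Basis" "f b \<notin> {-r..r}" by blast
      then have "(\<Prod>b\<in>Basis. indicator {-r..r} (f b) :: ennreal) = 0"
        by (intro prod_zero) (auto intro!: bexI[of _ b])
      then show ?thesis using e False by (simp add: indicator_def)
    qed
  qed
  have "ennreal ((pi * r / (2 * (real d + 1))) ^ CARD('n) * (P y)\<^sup>2)
     \<le> (\<integral>\<^sup>+ f. ennreal ((P (y + (\<Sum>b\<in>Basis. f b *\<^sub>R b)))\<^sup>2) * (\<Prod>b\<in>Basis. indicator {-r..r} (f b)) \<partial>(Pi\<^sub>M (Basis :: (real^'n) set) (\<lambda>_. lborel)))"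
    using tensor_step[OF P r, of "Basis :: (real^'n) set" y] by simp
  also have "\<dots> = (\<integral>\<^sup>+ f. ennreal ((P (y + (\<Sum>b\<in>Basis. f b *\<^sub>R b)))\<^sup>2) * indicator (cube0 r) (\<Sum>b\<in>Basis. f b *\<^sub>R b :: real^'n) \<partial>(Pi\<^sub>M (Basis :: (real^'n) set) (\<lambda>_. lborel)))"
    by (simp add: ind)
  also have "\<dots> = (\<integral>\<^sup>+ z. ennreal ((P (y + z))\<^sup>2) * indicator (cube0 r) z \<partial>(distr (Pi\<^sub>M (Basis :: (real^'n) set) (\<lambda>_. lborel)) borel (\<lambda>f. \<Sum>b\<in>Basis. f b *\<^sub>R b)))"
    using mc by (subst nn_integral_distr) (auto intro!: borel_measurable_sum measurable_compose[OF measurable_component_singleton])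
  also have "\<dots> = (\<integral>\<^sup>+ z. ennreal ((P (y + z))\<^sup>2) * indicator (cube0 r) z \<partial>lborel)"
    by (simp add: lborel_eq[symmetric])
  finally show ?thesis .
qed

lemma nn_density_bound:
  fixes \<mu> :: "('a::euclidean_space) measure"
  assumes mu: "\<mu> = density lborel g" and gm: "g \<in> borel_measurable lborel"
    and fm: "f \<in> borel_measurable borel"
    and fB: "\<And>x. g x \<noteq> 0 \<Longrightarrow> f x \<le> B"
  shows "(\<integral>\<^sup>+ x. ennreal (f x) \<partial>\<mu>) \<le> ennreal B * emeasure \<mu> UNIV"
proof -
  have "(\<integral>\<^sup>+ x. ennreal (f x) \<partial>\<mu>) = (\<integral>\<^sup>+ x. g x * ennreal (f x) \<partial>lborel)"
    unfolding mu by (rule nn_integral_density[OF gm]) (use fm in measurable)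
  also have "\<dots> \<le> (\<integral>\<^sup>+ x. ennreal B * g x \<partial>lborel)"
  proof (rule nn_integral_mono)
    fix x
    show "g x * ennreal (f x) \<le> ennreal B * g x"
    proof (cases "g x = 0")
      case True then show ?thesis by simp
    next
      case False then show ?thesis using fB[OF False] by (subst mult.commute) (intro mult_left_mono ennreal_leI, auto)
    qed
  qed
  also have "\<dots> = ennreal B * (\<integral>\<^sup>+ x. g x \<partial>lborel)"
    by (rule nn_integral_cmult) (use gm in simp)
  also have "(\<integral>\<^sup>+ x. g x \<partial>lborel) = emeasure \<mu> UNIV"
    unfolding mu by (subst emeasure_density[OF gm]) auto
  finally show ?thesis .
qed

lemma integral_sq_nn:
  fixes \<mu> :: "('a::euclidean_space) measure"
  assumes mu: "\<mu> = density lborel g" and Pm: "P \<in> borel_measurable borel"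
  shows "(\<integral>x. (P x)\<^sup>2 \<partial>\<mu>) = enn2real (\<integral>\<^sup>+ x. ennreal ((P x)\<^sup>2) \<partial>\<mu>)"
proof (rule integral_eq_nn_integral)
  show "(\<lambda>x. (P x)\<^sup>2) \<in> borel_measurable \<mu>"
    unfolding mu using Pm by (simp add: measurable_cong_sets[OF sets_density refl])
qed simp

lemma christ_upper:
  fixes \<mu> :: "(real^'n::finite) measure"
  assumes mu: "\<mu> = density lborel g" and gm: "g \<in> borel_measurable lborel"
    and mU: "emeasure \<mu> UNIV = 1"
    and N: "N \<in> polys_deg d" and Ny: "N y = 1" and B: "B \<ge> 0"
    and NB: "\<And>x. g x \<noteq> 0 \<Longrightarrow> (N x)\<^sup>2 \<le> B"
  shows "christoffel \<mu> d y \<le> B"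
proof -
  have Nm: "N \<in> borel_measurable borel" by (rule polys_deg_borel[OF N])
  have "christoffel \<mu> d y \<le> (\<integral>x. (N x)\<^sup>2 \<partial>\<mu>)"
    unfolding christoffel_def
  proof (rule cInf_lower)
    show "(\<integral>x. (N x)\<^sup>2 \<partial>\<mu>) \<in> {\<integral>x. (P x)\<^sup>2 \<partial>\<mu> |P. P \<in> polys_deg d \<and> P y = 1}"
      using N Ny by blast
    show "bdd_below {\<integral>x. (P x)\<^sup>2 \<partial>\<mu> |P. P \<in> polys_deg d \<and> P y = 1}"
      by (rule bdd_belowI[of _ 0]) auto
  qed
  also have "\<dots> = enn2real (\<integral>\<^sup>+ x. ennreal ((N x)\<^sup>2) \<partial>\<mu>)"
    by (rule integral_sq_nn[OF mu Nm])
  also have "\<dots> \<le> enn2real (ennreal B * emeasure \<mu> UNIV)"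
  proof (rule enn2real_mono)
    show "(\<integral>\<^sup>+ x. ennreal ((N x)\<^sup>2) \<partial>\<mu>) \<le> ennreal B * emeasure \<mu> UNIV"
      by (rule nn_density_bound[OF mu gm]) (use Nm NB in auto)
    show "ennreal B * emeasure \<mu> UNIV < top" using mU by simp
  qed
  also have "\<dots> = B" using mU B by simp
  finally show ?thesis .
qed

lemma christ_lower:
  fixes \<mu> :: "(real^'n::finite) measure"
  assumes mu: "\<mu> = density lborel g" and gm: "g \<in> borel_measurable lborel"
    and fin: "\<And>P. P \<in> polys_deg d \<Longrightarrow> (\<integral>\<^sup>+ x. ennreal ((P x)\<^sup>2) \<partial>\<mu>) < top"
    and gw: "\<And>z. z \<in> cube0 r \<Longrightarrow> g (y + z) \<ge> ennreal wm"
    and wm: "wm \<ge> 0" and r: "r > 0"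
  shows "christoffel \<mu> d y \<ge> wm * (pi * r / (2 * (real d + 1))) ^ CARD('n)"
proof -
  let ?c = "(pi * r / (2 * (real d + 1))) ^ CARD('n)"
  have c0: "?c \<ge> 0" using r by (auto intro!: divide_nonneg_pos)
  show ?thesis unfolding christoffel_def
  proof (rule cInf_greatest)
    show "{\<integral>x. (P x)\<^sup>2 \<partial>\<mu> |P. P \<in> polys_deg d \<and> P y = 1} \<noteq> {}"
      using polys_deg_const[of 1 d] by blast
    fix v assume "v \<in> {\<integral>x. (P x)\<^sup>2 \<partial>\<mu> |P. P \<in> polys_deg d \<and> P y = 1}"
    then obtain P where P: "P \<in> polys_deg d" and Py: "P y = 1" and v: "v = (\<integral>x. (P x)\<^sup>2 \<partial>\<mu>)" by blast
    have Pm[measurable]: "P \<in> borel_measurable borel" by (rule polys_deg_borel[OF P])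
    have hm: "(\<lambda>x. g x * ennreal ((P x)\<^sup>2)) \<in> borel_measurable borel"
      using gm by (simp add: measurable_lborel1) 
    have "ennreal (wm * ?c) = ennreal wm * ennreal (?c * (P y)\<^sup>2)"
      using Py wm c0 by (simp add: ennreal_mult)
    also have "\<dots> \<le> ennreal wm * (\<integral>\<^sup>+ z. ennreal ((P (y + z))\<^sup>2) * indicator (cube0 r) z \<partial>lborel)"
      by (intro mult_left_mono cube_bound[OF P r]) simp
    also have "\<dots> = (\<integral>\<^sup>+ z. ennreal wm * (ennreal ((P (y + z))\<^sup>2) * indicator (cube0 r) z) \<partial>lborel)"
    proof (rule nn_integral_cmult[symmetric])
      have mc: "cube0 r \<in> sets (borel :: (real^'n) measure)"
      proof -
        have "cube0 r = (\<Inter>b\<in>Basis. {z :: real^'n. \<bar>z \<bullet> b\<bar> \<le> r})" by (auto simp: cube0_def)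
        moreover have "closed (\<Inter>b\<in>Basis. {z :: real^'n. \<bar>z \<bullet> b\<bar> \<le> r})"
          by (intro closed_INT ballI closed_Collect_le continuous_intros)
        ultimately show ?thesis by (simp add: borel_closed)
      qed
      then show "(\<lambda>z. ennreal ((P (y + z))\<^sup>2) * indicator (cube0 r) z) \<in> borel_measurable lborel"
        by measurable
    qed
    also have "\<dots> \<le> (\<integral>\<^sup>+ z. g (y + z) * ennreal ((P (y + z))\<^sup>2) \<partial>lborel)"
    proof (rule nn_integral_mono)
      fix z
      show "ennreal wm * (ennreal ((P (y + z))\<^sup>2) * indicator (cube0 r) z) \<le> g (y + z) * ennreal ((P (y + z))\<^sup>2)"
        using gw[of z] by (cases "z \<in> cube0 r") (auto intro: mult_right_mono)
    qed
    also have "\<dots> = (\<integral>\<^sup>+ x. g x * ennreal ((P x)\<^sup>2) \<partial>(distr lborel borel ((+) y)))"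
      by (subst nn_integral_distr) (use hm in auto)
    also have "\<dots> = (\<integral>\<^sup>+ x. g x * ennreal ((P x)\<^sup>2) \<partial>lborel)"
      by (simp add: lborel_distr_plus)
    also have "\<dots> = (\<integral>\<^sup>+ x. ennreal ((P x)\<^sup>2) \<partial>\<mu>)"
      unfolding mu by (rule nn_integral_density[symmetric, OF gm]) measurable
    finally have le: "ennreal (wm * ?c) \<le> (\<integral>\<^sup>+ x. ennreal ((P x)\<^sup>2) \<partial>\<mu>)" .
    have "wm * ?c = enn2real (ennreal (wm * ?c))" using wm c0 by simp
    also have "\<dots> \<le> enn2real (\<integral>\<^sup>+ x. ennreal ((P x)\<^sup>2) \<partial>\<mu>)"
      by (rule enn2real_mono[OF le fin[OF P]])
    also have "\<dots> = v" using integral_sq_nn[OF mu Pm] v by simp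
    finally show "wm * ?c \<le> v" .
  qed
qed

lemma compact_eventually:
  assumes K: "compact K"
    and loc: "\<And>z. z \<in> K \<Longrightarrow> \<exists>U. open U \<and> z \<in> U \<and> eventually (\<lambda>k. \<forall>y\<in>U. Q k y) F"
  shows "eventually (\<lambda>k. \<forall>y\<in>K. Q k y) F"
proof -
  from loc obtain Uf where Uf: "\<And>z. z \<in> K \<Longrightarrow> open (Uf z) \<and> z \<in> Uf z \<and> eventually (\<lambda>k. \<forall>y\<in>Uf z. Q k y) F"
    by metis
  obtain T where T: "T \<subseteq> K" "finite T" "K \<subseteq> \<Union>(Uf ` T)"
    using compactE_image[OF K, of K Uf] Uf by blast
  have "eventually (\<lambda>k. \<forall>z\<in>T. \<forall>y\<in>Uf z. Q k y) F"
    using T Uf by (intro eventually_ball_finite) auto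
  then show ?thesis
    by eventually_elim (use T in blast)
qed

lemma hausdorff_le:
  fixes X Y :: "'a::real_normed_vector set"
  assumes X: "X \<noteq> {}" "bounded X" and Y: "Y \<noteq> {}" "bounded Y"
    and XY: "\<And>x. x \<in> X \<Longrightarrow> infdist x Y \<le> e"
    and YX: "\<And>y. y \<in> Y \<Longrightarrow> infdist y X \<le> e"
  shows "\<bar>hausdorff_dist X Y\<bar> \<le> e"
proof -
  obtain BX where BX: "\<And>x. x \<in> X \<Longrightarrow> norm x \<le> BX" using X(2) by (auto simp: bounded_iff)
  obtain BY where BY: "\<And>y. y \<in> Y \<Longrightarrow> norm y \<le> BY" using Y(2) by (auto simp: bounded_iff)
  obtain x0 where x0: "x0 \<in> X" using X by blast
  obtain y0 where y0: "y0 \<in> Y" using Y by blast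
  have bX: "bdd_above ((\<lambda>x. infdist x Y) ` X)"
  proof (rule bdd_aboveI2)
    fix x assume "x \<in> X"
    have "infdist x Y \<le> dist x y0" by (rule infdist_le[OF y0])
    also have "\<dots> \<le> norm x + norm y0" by (simp add: dist_norm norm_triangle_ineq4)
    also have "\<dots> \<le> BX + norm y0" using BX[OF \<open>x \<in> X\<close>] by simp
    finally show "infdist x Y \<le> BX + norm y0" .
  qed
  have s1: "(SUP x\<in>X. infdist x Y) \<le> e" using X XY by (intro cSUP_least) auto
  have s2: "(SUP y\<in>Y. infdist y X) \<le> e" using Y YX by (intro cSUP_least) auto
  have s0: "0 \<le> (SUP x\<in>X. infdist x Y)"
    using cSUP_upper[OF x0 bX] infdist_nonneg[of x0 Y] by linarith
  show ?thesis unfolding hausdorff_dist_def using s0 s1 s2 by auto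
qed

lemma infdist_lt_obtain:
  fixes S :: "'a::heine_borel set"
  assumes "closed S" "S \<noteq> {}" "infdist x S < e"
  obtains s where "s \<in> S" "dist x s < e"
  using infdist_attains_inf[OF assms(1,2), of x] assms(3) by metis

lemma bounded_infdist_lt:
  fixes S :: "'a::{heine_borel,real_normed_vector} set"
  assumes "closed S" "S \<noteq> {}" "bounded S"
  shows "bounded {x. infdist x S < e}"
proof -
  obtain B where B: "\<And>s. s \<in> S \<Longrightarrow> norm s \<le> B" using assms(3) by (auto simp: bounded_iff)
  show ?thesis unfolding bounded_iff
  proof (intro exI ballI)
    fix x assume "x \<in> {x. infdist x S < e}"
    then obtain s where s: "s \<in> S" "dist x s < e" using infdist_lt_obtain[OF assms(1,2)] by blast
    have "norm x \<le> norm s + dist x s" by (metis dist_norm norm_triangle_sub add.commute)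
    then show "norm x \<le> B + e" using B[OF s(1)] s(2) by simp
  qed
qed

lemma frontier_near1:
  fixes S A :: "'a::{heine_borel,real_normed_vector} set"
  assumes S: "closed S" "S \<noteq> {}" and FS: "frontier S \<noteq> {}" and e: "e > 0"
    and outer: "\<And>x. x \<in> A \<Longrightarrow> infdist x S < e / 2"
    and inner: "\<And>x. ball x (e / 2) \<subseteq> interior S \<Longrightarrow> x \<in> A"
    and y: "y \<in> frontier A"
  shows "infdist y (frontier S) < e"
proof (rule ccontr)
  assume "\<not> infdist y (frontier S) < e"
  then have ge: "infdist y (frontier S) \<ge> e" by simp
  have disj: "ball y e \<inter> frontier S = {}"
  proof (rule ccontr)
    assume "ball y e \<inter> frontier S \<noteq> {}"
    then obtain z where "z \<in> frontier S" "dist y z < e" by auto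
    then have "infdist y (frontier S) < e" using infdist_le[of z "frontier S" y] by linarith
    with ge show False by simp
  qed
  have "ball y e \<inter> S = {} \<or> ball y e - S = {}"
    using connected_Int_frontier[of "ball y e" S] disj by auto
  then show False
  proof
    assume b: "ball y e \<inter> S = {}"
    obtain s where s: "s \<in> S" "infdist y S = dist y s" using infdist_attains_inf[OF S] by metis
    have "s \<notin> ball y e" using b s(1) by auto
    then have "dist y s \<ge> e" by (simp add: not_less)
    then have ge2: "infdist y S \<ge> e" using s by simp
    have "closure A \<subseteq> {x. infdist x S \<le> e / 2}"
    proof (rule closure_minimal)
      show "A \<subseteq> {x. infdist x S \<le> e / 2}" using outer by (auto intro: less_imp_le)
      show "closed {x. infdist x S \<le> e / 2}"
        by (intro closed_Collect_le continuous_intros)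
    qed
    moreover have "y \<in> closure A" using y by (simp add: frontier_def)
    ultimately have "infdist y S \<le> e / 2" by auto
    with ge2 e show False by simp
  next
    assume "ball y e - S = {}"
    then have "ball y e \<subseteq> S" by auto
    then have bI: "ball y e \<subseteq> interior S" by (simp add: interior_maximal)
    have "ball y (e / 2) \<subseteq> A"
    proof
      fix y' assume "y' \<in> ball y (e / 2)"
      have "ball y' (e / 2) \<subseteq> ball y e"
      proof
        fix u assume "u \<in> ball y' (e / 2)"
        then have "dist y u \<le> dist y y' + dist y' u" using dist_triangle by blast
        then show "u \<in> ball y e" using \<open>u \<in> ball y' (e / 2)\<close> \<open>y' \<in> ball y (e / 2)\<close> by auto
      qed
      then show "y' \<in> A" using bI by (intro inner) auto
    qed
    then have "y \<in> interior A" using e by (meson centre_in_ball half_gt_zero interior_maximal open_ball subsetD)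
    with y show False by (simp add: frontier_def)
  qed
qed

lemma frontier_near2:
  fixes A :: "'a::real_normed_vector set"
  assumes a: "a \<in> A" "dist a z < e" and c: "c \<notin> A" "dist c z < e"
  shows "\<exists>y\<in>frontier A. dist y z < e"
proof -
  have sub: "closed_segment a c \<subseteq> ball z e"
    using a c by (intro closed_segment_subset convex_ball) (auto simp: dist_commute)
  have "closed_segment a c \<inter> frontier A \<noteq> {}"
    using a c by (intro connected_Int_frontier connected_segment) auto
  then obtain y where "y \<in> closed_segment a c" "y \<in> frontier A" by auto
  then have "y \<in> ball z e" using sub by blast
  then show ?thesis using \<open>y \<in> frontier A\<close> by (auto simp: dist_commute)
qed

lemma card_pos: "0 < CARD('n::finite)"
  by (simp add: card_gt_0_iff)

lemma sdim_lower:
  assumes "1 \<le> p"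
  shows "((real d + 1) / real p) ^ p \<le> real (sdim p d)"
proof -
  have "(real (p + d) / real p) ^ p \<le> real ((p + d) choose p)"
    by (rule binomial_ge_n_over_k_pow_k) simp
  moreover have "((real d + 1) / real p) ^ p \<le> (real (p + d) / real p) ^ p"
    using assms by (intro power_mono divide_right_mono) auto
  moreover have "(p + d) choose p = sdim p d"
    unfolding sdim_def using binomial_symmetric[of p "p + d"] by simp
  ultimately show ?thesis by simp
qed

lemma sdim_upper: "real (sdim p d) \<le> (real p + real d) ^ p"
proof -
  have "(p + d) choose p \<le> (p + d) ^ p" by (rule binomial_le_pow) simp
  moreover have "(p + d) choose p = sdim p d"
    unfolding sdim_def using binomial_symmetric[of p "p + d"] by simp
  ultimately have "sdim p d \<le> (p + d) ^ p" by simp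
  then have "real (sdim p d) \<le> real ((p + d) ^ p)" by linarith
  then show ?thesis by simp
qed

lemma omega_pos: "omega p > 0"
  unfolding omega_def by (intro divide_pos_pos mult_pos_pos Gamma_real_pos) auto

lemma alpha_bounds:
  assumes "wm > 0" "\<delta> > 0"
  shows "0 \<le> alpha_th p wm \<delta> d" "alpha_th p wm \<delta> d \<le> wm * \<delta> ^ p * omega p"
proof -
  let ?N = "(real d + 1) * (real d + 2) * (real d + 3)"
  let ?M = "(real d + real p + 1) * (real d + real p + 2) * (2 * real d + real p + 6)"
  have N0: "0 \<le> ?N" by simp
  have M0: "0 < ?M" by (intro mult_pos_pos) auto
  have NM: "?N \<le> ?M" by (intro mult_mono) auto
  have c0: "0 \<le> wm * \<delta> ^ p * omega p" using assms omega_pos[of p] by simp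
  have eq: "alpha_th p wm \<delta> d = (wm * \<delta> ^ p * omega p) * (?N / ?M)"
    unfolding alpha_th_def by (simp add: field_simps)
  show "0 \<le> alpha_th p wm \<delta> d" unfolding eq using c0 N0 M0 by simp
  have "?N / ?M \<le> 1" using NM M0 by simp
  then have "(wm * \<delta> ^ p * omega p) * (?N / ?M) \<le> (wm * \<delta> ^ p * omega p) * 1"
    using c0 by (rule mult_left_mono)
  then show "alpha_th p wm \<delta> d \<le> wm * \<delta> ^ p * omega p"
    unfolding eq by simp
qed

lemma deg_cond_lower:
  assumes "deg_cond p D wm \<delta> d"
  shows "2 powr (3 - \<delta> * real d / (\<delta> + D)) * real d ^ p * (exp 1 / real p) ^ p \<le> alpha_th p wm \<delta> d"
proof -
  have "2 powr (3 - \<delta> * real d / (\<delta> + D)) * real d ^ p * (exp 1 / real p) ^ p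
      \<le> 2 powr (3 - \<delta> * real d / (\<delta> + D)) * real d ^ p * (exp 1 / real p) ^ p * exp (real p ^ 2 / real d)"
  proof -
    let ?X = "2 powr (3 - \<delta> * real d / (\<delta> + D)) * real d ^ p * (exp 1 / real p) ^ p"
    have X0: "0 \<le> ?X" by simp
    have "1 \<le> exp (real p ^ 2 / real d)" by simp
    then have "?X * 1 \<le> ?X * exp (real p ^ 2 / real d)" using X0 by (rule mult_left_mono)
    then show ?thesis by simp
  qed
  then show ?thesis using assms unfolding deg_cond_def by linarith
qed

lemma needle:
  fixes S :: "(real^'n::finite) set" and x :: "real^'n"
  assumes S: "compact S" "S \<noteq> {}" and r: "r > 0" and xr: "infdist x S \<ge> r"
  defines "q \<equiv> 1 - r\<^sup>2 / (r + diameter S)\<^sup>2"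
  shows "\<exists>N \<in> polys_deg d. N x = 1 \<and> (\<forall>y\<in>S. (N y)\<^sup>2 \<le> q ^ (d - 1))"
proof -
  define D where "D = diameter S"
  have D0: "D \<ge> 0" unfolding D_def by (rule diameter_ge_0[OF compact_imp_bounded[OF S(1)]])
  define t where "t = infdist x S"
  have tr: "t \<ge> r" using xr by (simp add: t_def)
  define R where "R = t + D"
  have R0: "R > 0" using tr r D0 by (simp add: R_def)
  define m where "m = d div 2"
  define N where "N = (\<lambda>y::real^'n. (1 - (\<Sum>i\<in>UNIV. (y $ i - x $ i)\<^sup>2) / R\<^sup>2) ^ m)"
  have base: "(\<lambda>y::real^'n. 1 - (\<Sum>i\<in>UNIV. (y $ i - x $ i)\<^sup>2) / R\<^sup>2) \<in> polys_deg 2"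
  proof -
    have "(\<lambda>y::real^'n. (y $ i - x $ i) * (y $ i - x $ i)) \<in> polys_deg 2" for i
    proof -
      have "(\<lambda>y::real^'n. y $ i + (- x $ i)) \<in> polys_deg 1"
        by (intro polys_deg_add polys_deg_coord polys_deg_const) auto
      then have h: "(\<lambda>y::real^'n. y $ i - x $ i) \<in> polys_deg 1" by simp
      have "(\<lambda>y::real^'n. (y $ i - x $ i) * (y $ i - x $ i)) \<in> polys_deg (1 + 1)"
        by (rule polys_deg_mult[OF h h])
      then show ?thesis by (simp only: one_add_one)
    qed
    then have "(\<lambda>y::real^'n. \<Sum>i\<in>UNIV. (y $ i - x $ i) * (y $ i - x $ i)) \<in> polys_deg 2"
      by (intro polys_deg_sum) auto
    then have "(\<lambda>y::real^'n. 1 + (- 1 / R\<^sup>2) * (\<Sum>i\<in>UNIV. (y $ i - x $ i) * (y $ i - x $ i))) \<in> polys_deg 2"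
      by (intro polys_deg_add polys_deg_const polys_deg_cmult)
    then show ?thesis by (simp add: power2_eq_square)
  qed
  have Np: "N \<in> polys_deg d"
  proof -
    have "N \<in> polys_deg (2 * m)" unfolding N_def using polys_deg_power[OF base, of m] by simp
    then show ?thesis by (rule polys_deg_mono) (simp add: m_def)
  qed
  have Nx: "N x = 1" by (simp add: N_def)
  have q_def': "q = 1 - r\<^sup>2 / (r + D)\<^sup>2" by (simp add: q_def D_def)
  have q1: "q \<le> 1" unfolding q_def' by simp
  have q0: "0 \<le> q"
  proof -
    have "r\<^sup>2 \<le> (r + D)\<^sup>2" using r D0 by (intro power_mono) auto
    then show ?thesis unfolding q_def' using r D0 by (simp add: divide_le_eq_1)
  qed
  have bnd: "(N y)\<^sup>2 \<le> q ^ (d - 1)" if y: "y \<in> S" for y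
  proof -
    have sumeq: "(\<Sum>i\<in>UNIV. (y $ i - x $ i)\<^sup>2) = (dist y x)\<^sup>2"
    proof -
      have "(dist y x)\<^sup>2 = (y - x) \<bullet> (y - x)" by (simp only: dist_norm power2_norm_eq_inner)
      also have "\<dots> = (\<Sum>i\<in>UNIV. (y $ i - x $ i)\<^sup>2)" by (simp add: inner_vec_def power2_eq_square)
      finally show ?thesis by simp
    qed
    have d1: "t \<le> dist y x" unfolding t_def using infdist_le[OF y, of x] by (simp add: dist_commute)
    obtain s where s: "s \<in> S" "infdist x S = dist x s"
      using infdist_attains_inf[OF compact_imp_closed[OF S(1)] S(2)] by metis
    have "dist y x \<le> dist x s + dist s y" by (metis dist_commute dist_triangle)
    also have "dist s y \<le> D" unfolding D_def by (rule diameter_bounded_bound[OF compact_imp_bounded[OF S(1)] s(1) y])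
    finally have d2: "dist y x \<le> R" using s unfolding R_def t_def by simp
    define u where "u = 1 - (dist y x)\<^sup>2 / R\<^sup>2"
    have u0: "0 \<le> u" unfolding u_def using d2 R0 by (simp add: divide_le_eq_1 power_mono abs_le_iff power2_le_iff_abs_le)
    have "t / R \<ge> r / (r + D)"
    proof -
      have "r * (t + D) \<le> t * (r + D)" using tr D0 by (simp add: algebra_simps mult_left_mono)
      then show ?thesis unfolding R_def using r R0 D0 by (simp add: divide_simps R_def)
    qed
    then have "(r / (r + D))\<^sup>2 \<le> (t / R)\<^sup>2" using r D0 by (intro power_mono) auto
    moreover have "(t / R)\<^sup>2 \<le> (dist y x / R)\<^sup>2" using d1 tr r R0 by (intro power_mono divide_right_mono) auto
    ultimately have "(r / (r + D))\<^sup>2 \<le> (dist y x)\<^sup>2 / R\<^sup>2" by (simp add: power_divide)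
    then have uq: "u \<le> q" unfolding u_def q_def' by (simp add: power_divide)
    have "(N y)\<^sup>2 = u ^ (2 * m)" by (simp add: N_def u_def sumeq power_mult[symmetric] mult.commute)
    also have "\<dots> \<le> q ^ (2 * m)" using u0 uq by (intro power_mono) auto
    also have "\<dots> \<le> q ^ (d - 1)" using q0 q1 by (intro power_decreasing) (auto simp: m_def)
    finally show ?thesis .
  qed
  show ?thesis using Np Nx bnd by blast
qed

lemma numeric_key:
  fixes q q2 \<delta> D \<alpha> :: real and p d :: nat
  assumes p: "1 \<le> p" and d: "2 \<le> d" and \<delta>: "\<delta> > 0" and D: "D > 0"
    and q0: "0 \<le> q" and qq: "q \<le> q2\<^sup>2" and q2: "0 < q2"
    and E2: "q2 \<le> 2 powr (- \<delta> / D)"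
    and E1: "(1 + real p) ^ p * q2 ^ (d - 2) < 8 * (exp 1 / real p) ^ p"
    and A: "2 powr (3 - \<delta> * real d / (\<delta> + D)) * real d ^ p * (exp 1 / real p) ^ p \<le> \<alpha>"
  shows "real (sdim p d) * q ^ (d - 1) < \<alpha>"
proof -
  let ?K = "8 * (exp 1 / real p) ^ p"
  have s1: "real (sdim p d) \<le> (1 + real p) ^ p * real d ^ p"
  proof -
    have "real p + real d \<le> (1 + real p) * real d"
    proof -
      have "real p * 1 \<le> real p * real d" using d by (intro mult_left_mono) auto
      then show ?thesis by (simp add: algebra_simps)
    qed
    then have "(real p + real d) ^ p \<le> ((1 + real p) * real d) ^ p" by (intro power_mono) auto
    then show ?thesis using sdim_upper[of p d] by (simp add: power_mult_distrib)
  qed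
  have s2: "q ^ (d - 1) \<le> q2 ^ (d - 2) * q2 ^ d"
  proof -
    have "q ^ (d - 1) \<le> (q2\<^sup>2) ^ (d - 1)" using q0 qq by (intro power_mono) auto
    also have "(q2\<^sup>2) ^ (d - 1) = q2 ^ ((d - 2) + d)"
    proof -
      have e: "2 * (d - 1) = (d - 2) + d" using d by arith
      have "(q2\<^sup>2) ^ (d - 1) = q2 ^ (2 * (d - 1))" by (simp add: power_mult)
      then show ?thesis by (simp only: e)
    qed
    also have "\<dots> = q2 ^ (d - 2) * q2 ^ d" by (simp add: power_add)
    finally show ?thesis .
  qed
  have s3: "q2 ^ d \<le> 2 powr (- \<delta> * real d / (\<delta> + D))"
  proof -
    have "q2 ^ d \<le> (2 powr (- \<delta> / D)) ^ d" using q2 E2 by (intro power_mono) auto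
    also have "\<dots> = 2 powr (real d * (- \<delta> / D))" by (simp add: powr_power)
    also have "\<dots> \<le> 2 powr (- \<delta> * real d / (\<delta> + D))"
    proof (rule powr_mono)
      have "\<delta> * real d / (\<delta> + D) \<le> \<delta> * real d / D"
        using \<delta> D by (intro divide_left_mono) auto
      then show "real d * (- \<delta> / D) \<le> - \<delta> * real d / (\<delta> + D)" by (simp add: field_simps)
    qed simp
    finally show ?thesis .
  qed
  have dp: "0 < real d ^ p" using d by simp
  have "real (sdim p d) * q ^ (d - 1) \<le> ((1 + real p) ^ p * real d ^ p) * (q2 ^ (d - 2) * q2 ^ d)"
    using s1 s2 q0 by (intro mult_mono) auto
  also have "\<dots> = ((1 + real p) ^ p * q2 ^ (d - 2)) * (real d ^ p * q2 ^ d)" by (simp add: mult_ac)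
  also have "\<dots> < ?K * (real d ^ p * q2 ^ d)"
    using E1 dp q2 by (intro mult_strict_right_mono) auto
  also have "\<dots> \<le> ?K * (real d ^ p * 2 powr (- \<delta> * real d / (\<delta> + D)))"
    using s3 dp by (intro mult_left_mono) auto
  also have "\<dots> = 2 powr (3 - \<delta> * real d / (\<delta> + D)) * real d ^ p * (exp 1 / real p) ^ p"
  proof -
    have "2 powr (3 - \<delta> * real d / (\<delta> + D)) = 8 * 2 powr (- \<delta> * real d / (\<delta> + D))"
      by (simp add: powr_diff powr_minus divide_inverse)
    then show ?thesis by (simp add: mult_ac)
  qed
  also have "\<dots> \<le> \<alpha>" by (rule A)
  finally show ?thesis .
qed

lemma aux_frac: "(X::real) > 0 \<Longrightarrow> (X / P) * (A / (2 * X)) = A / (2 * P)"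
  by (simp add: field_simps)

theorem theorem3p11:
  fixes S :: "(real^'n::finite) set"
    and w :: "real^'n \<Rightarrow> real"
    and wm :: real
    and \<mu> :: "(real^'n) measure"
    and \<delta> :: "nat \<Rightarrow> real"
    and d :: "nat \<Rightarrow> nat"
    and Sk :: "nat \<Rightarrow> (real^'n) set"
  assumes "compact S"
    and "closure (interior S) = S"
    and "wm > 0"
    and "\<And>x. x \<in> interior S \<Longrightarrow> w x \<ge> wm"
    and "set_integrable lborel (interior S) w"
    and "\<mu> = density lborel (\<lambda>x. ennreal (w x) * indicator (interior S) x)"
    and "emeasure \<mu> S = 1"
    and "decseq \<delta>"
    and "\<And>k. \<delta> k > 0"
    and "\<delta> \<longlonglongrightarrow> 0"
    and "\<And>k. d k > 0"
    and "\<And>k. deg_cond CARD('n) (diameter S) wm (\<delta> k) (d k)"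
    and "\<And>k m. 0 < m \<Longrightarrow> m < d k \<Longrightarrow> \<not> deg_cond CARD('n) (diameter S) wm (\<delta> k) m"
    and "\<And>k. Sk k = {x. real (sdim CARD('n) (d k)) * christoffel \<mu> (d k) x
                          \<ge> alpha_th CARD('n) wm (\<delta> k) (d k)}"
  shows "((\<lambda>k. hausdorff_dist (Sk k) S) \<longlonglongrightarrow> 0) \<and>
         ((\<lambda>k. hausdorff_dist (frontier (Sk k)) (frontier S)) \<longlonglongrightarrow> 0)"
proof -
  note cS = assms(1) and clI = assms(2) and wm = assms(3) and wI = assms(4) and wint = assms(5)
    and mu = assms(6) and mS = assms(7) and dpos = assms(9) and dlim = assms(10) and dk = assms(11)
    and dc = assms(12) and Skdef = assms(14)
  define p where "p = CARD('n)"
  define I where "I = interior S"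
  define D where "D = diameter S"
  define g where "g = (\<lambda>x. ennreal (w x) * indicator I x)"
  define \<alpha> where "\<alpha> = (\<lambda>k. alpha_th p wm (\<delta> k) (d k))"
  have p1: "1 \<le> p" unfolding p_def using card_pos[where 'n='n] by simp
  have Sk: "\<And>k. Sk k = {x. real (sdim p (d k)) * christoffel \<mu> (d k) x \<ge> \<alpha> k}"
    using Skdef by (simp add: p_def \<alpha>_def)
  have mu': "\<mu> = density lborel g" using mu by (simp add: g_def I_def)
  have clS: "closed S" and bS: "bounded S" using cS by (auto intro: compact_imp_closed compact_imp_bounded)
  have Sne: "S \<noteq> {}" using mS by auto
  have Ine: "I \<noteq> {}" using clI Sne unfolding I_def by auto
  have IS: "I \<subseteq> S" unfolding I_def by (rule interior_subset)
  have oI: "open I" unfolding I_def by simp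
  have clI': "closure I = S" using clI by (simp add: I_def)
  have D0: "D > 0"
  proof -
    obtain a where a: "a \<in> I" using Ine by blast
    obtain e where e: "e > 0" "ball a e \<subseteq> I" using oI a by (meson openE)
    obtain v :: "real^'n" where v: "norm v = e / 2" using vector_choose_size[of "e/2"] e by auto
    have "a + v \<in> ball a e" using v e by (simp add: dist_norm)
    then have "a + v \<in> S" "a \<in> S" using e a IS by auto
    then have "dist a (a + v) \<le> D" unfolding D_def by (intro diameter_bounded_bound[OF bS])
    then show ?thesis using v e by (simp add: dist_norm)
  qed
  have gm: "g \<in> borel_measurable lborel"
  proof -
    have "(\<lambda>x. indicator I x *\<^sub>R w x) \<in> borel_measurable lborel"
      using wint unfolding set_integrable_def I_def by (rule borel_measurable_integrable)
    then have "(\<lambda>x. ennreal (indicator I x *\<^sub>R w x)) \<in> borel_measurable lborel" by measurable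
    moreover have "g = (\<lambda>x. ennreal (indicator I x *\<^sub>R w x))"
      by (auto simp: g_def indicator_def fun_eq_iff)
    ultimately show ?thesis by simp
  qed
  have gnz: "x \<in> S" if "g x \<noteq> 0" for x
    using that IS by (auto simp: g_def indicator_def)
  have mU: "emeasure \<mu> UNIV = 1"
  proof -
    have Sb: "S \<in> sets lborel" using clS by (simp add: borel_closed)
    have "emeasure \<mu> S = (\<integral>\<^sup>+ x. g x * indicator S x \<partial>lborel)"
      unfolding mu' by (rule emeasure_density[OF gm Sb])
    also have "\<dots> = (\<integral>\<^sup>+ x. g x * indicator UNIV x \<partial>lborel)"
      by (rule nn_integral_cong) (use gnz in \<open>auto simp: indicator_def\<close>)
    also have "\<dots> = emeasure \<mu> UNIV"
      unfolding mu' by (rule emeasure_density[OF gm, symmetric]) simp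
    finally show ?thesis using mS by simp
  qed
  have fin: "(\<integral>\<^sup>+ x. ennreal ((P x)\<^sup>2) \<partial>\<mu>) < top" if P: "P \<in> polys_deg dd" for P dd
  proof -
    have contP: "continuous_on UNIV P" by (rule polys_deg_continuous[OF P])
    have "compact (P ` S)" by (rule compact_continuous_image[OF continuous_on_subset[OF contP] cS]) simp
    then obtain M where M: "\<And>y. y \<in> S \<Longrightarrow> norm (P y) \<le> M"
      by (metis compact_imp_bounded bounded_iff image_eqI)
    have "(\<integral>\<^sup>+ x. ennreal ((P x)\<^sup>2) \<partial>\<mu>) \<le> ennreal (M\<^sup>2) * emeasure \<mu> UNIV"
    proof (rule nn_density_bound[OF mu' gm])
      show "(\<lambda>x. (P x)\<^sup>2) \<in> borel_measurable borel" using polys_deg_borel[OF P] by measurable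
      fix x assume "g x \<noteq> 0"
      then have "norm (P x) \<le> M" using M gnz by blast
      then have "\<bar>P x\<bar>\<^sup>2 \<le> M\<^sup>2" by (intro power_mono) auto
      then show "(P x)\<^sup>2 \<le> M\<^sup>2" by simp
    qed
    also have "\<dots> < top" using mU by simp
    finally show ?thesis .
  qed
  have alim: "\<alpha> \<longlonglongrightarrow> 0"
  proof (rule tendsto_sandwich[of "\<lambda>_. 0" _ _ "\<lambda>k. wm * \<delta> k ^ p * omega p"])
    show "eventually (\<lambda>k. 0 \<le> \<alpha> k) sequentially"
      using alpha_bounds(1)[OF wm dpos] by (simp add: \<alpha>_def)
    show "eventually (\<lambda>k. \<alpha> k \<le> wm * \<delta> k ^ p * omega p) sequentially"
      using alpha_bounds(2)[OF wm dpos] by (simp add: \<alpha>_def)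
    have "(\<lambda>k. wm * \<delta> k ^ p * omega p) \<longlonglongrightarrow> wm * 0 ^ p * omega p"
      by (intro tendsto_intros dlim)
    moreover have "wm * (0::real) ^ p * omega p = 0" using p1 by (simp add: power_0_left)
    ultimately show "(\<lambda>k. wm * \<delta> k ^ p * omega p) \<longlonglongrightarrow> 0" by simp
  qed simp
  have dc': "2 powr (3 - \<delta> k * real (d k) / (\<delta> k + D)) * real (d k) ^ p * (exp 1 / real p) ^ p \<le> \<alpha> k" for k
    using deg_cond_lower[OF dc[of k]] by (simp add: p_def D_def \<alpha>_def)
  have dinf: "eventually (\<lambda>k. N < d k) sequentially" for N
  proof -
    define c where "c = 2 powr (3 - real N) * (exp 1 / real p) ^ p"
    have c0: "c > 0" unfolding c_def using p1 by simp
    have "eventually (\<lambda>k. \<alpha> k < c) sequentially" using order_tendstoD(2)[OF alim c0] .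
    then show ?thesis
    proof eventually_elim
      case (elim k)
      show ?case
      proof (rule ccontr)
        assume "\<not> N < d k"
        then have dN: "d k \<le> N" by simp
        have fr: "\<delta> k * real (d k) / (\<delta> k + D) \<le> real N"
        proof -
          have "\<delta> k * real (d k) / (\<delta> k + D) \<le> \<delta> k * real (d k) / \<delta> k"
            using dpos[of k] D0 by (intro divide_left_mono) auto
          also have "\<dots> = real (d k)" using dpos[of k] by simp
          finally show ?thesis using dN by simp
        qed
        have "2 powr (3 - real N) \<le> 2 powr (3 - \<delta> k * real (d k) / (\<delta> k + D))"
          using fr by (intro powr_mono) auto
        moreover have "1 \<le> real (d k) ^ p" using dk[of k] by simp
        ultimately have "2 powr (3 - real N) * 1 \<le> 2 powr (3 - \<delta> k * real (d k) / (\<delta> k + D)) * real (d k) ^ p"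
          by (intro mult_mono) auto
        then have "c \<le> 2 powr (3 - \<delta> k * real (d k) / (\<delta> k + D)) * real (d k) ^ p * (exp 1 / real p) ^ p"
          unfolding c_def by (intro mult_right_mono) auto
        with dc'[of k] elim show False by simp
      qed
    qed
  qed
  have LB: "eventually (\<lambda>k. \<forall>x. ball x e \<subseteq> I \<longrightarrow> x \<in> Sk k) sequentially" if e: "e > 0" for e
  proof -
    define \<rho> where "\<rho> = e / (2 * real p)"
    have \<rho>: "\<rho> > 0" unfolding \<rho>_def using e p1 by simp
    define L where "L = wm * (pi * \<rho> / (2 * real p)) ^ p"
    have L0: "L > 0" unfolding L_def using wm \<rho> p1 by simp
    have "eventually (\<lambda>k. \<alpha> k < L) sequentially" using order_tendstoD(2)[OF alim L0] .
    then show ?thesis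
    proof eventually_elim
      case (elim k)
      show ?case
      proof (intro allI impI)
        fix x assume bx: "ball x e \<subseteq> I"
        have cube: "x + z \<in> I" if z: "z \<in> cube0 \<rho>" for z
        proof -
          have "norm z \<le> (\<Sum>b\<in>Basis. \<bar>z \<bullet> b\<bar>)" by (rule norm_le_l1)
          also have "\<dots> \<le> (\<Sum>b\<in>(Basis :: (real^'n) set). \<rho>)"
            using z by (intro sum_mono) (auto simp: cube0_def)
          also have "\<dots> = real p * \<rho>" by (simp add: p_def)
          also have "\<dots> = e / 2" unfolding \<rho>_def using p1 by simp
          finally have "norm z < e" using e by simp
          then have "x + z \<in> ball x e" by (simp add: dist_norm)
          then show ?thesis using bx by blast
        qed
        have gw: "g (x + z) \<ge> ennreal wm" if "z \<in> cube0 \<rho>" for z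
          using cube[OF that] wI[of "x + z"] by (simp add: g_def I_def ennreal_leI)
        have cl: "christoffel \<mu> (d k) x \<ge> wm * (pi * \<rho> / (2 * (real (d k) + 1))) ^ p"
          unfolding p_def by (rule christ_lower[OF mu' gm fin gw]) (use wm \<rho> in auto)
        have sl: "((real (d k) + 1) / real p) ^ p \<le> real (sdim p (d k))"
          by (rule sdim_lower[OF p1])
        have "L = ((real (d k) + 1) / real p) ^ p * (wm * (pi * \<rho> / (2 * (real (d k) + 1))) ^ p)"
        proof -
          have "((real (d k) + 1) / real p) * (pi * \<rho> / (2 * (real (d k) + 1))) = pi * \<rho> / (2 * real p)"
            by (rule aux_frac) simp
          then have "((real (d k) + 1) / real p) ^ p * (pi * \<rho> / (2 * (real (d k) + 1))) ^ p = (pi * \<rho> / (2 * real p)) ^ p"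
            by (metis power_mult_distrib)
          then show ?thesis unfolding L_def by (simp add: mult_ac)
        qed
        also have "\<dots> \<le> real (sdim p (d k)) * christoffel \<mu> (d k) x"
          using sl cl wm \<rho> by (intro mult_mono) auto
        finally have "\<alpha> k \<le> real (sdim p (d k)) * christoffel \<mu> (d k) x" using elim by simp
        then show "x \<in> Sk k" using Sk by simp
      qed
    qed
  qed
  have UB: "eventually (\<lambda>k. \<forall>x. infdist x S \<ge> r \<longrightarrow> x \<notin> Sk k) sequentially" if r: "r > 0" for r
  proof -
    define q where "q = 1 - r\<^sup>2 / (r + D)\<^sup>2"
    have q0: "0 \<le> q"
    proof -
      have "r\<^sup>2 \<le> (r + D)\<^sup>2" using r D0 by (intro power_mono) auto
      then show ?thesis unfolding q_def using r D0 by (simp add: divide_le_eq_1)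
    qed
    have q1: "q < 1" unfolding q_def using r D0 by simp
    define q2 where "q2 = sqrt ((1 + q) / 2)"
    have q2p: "0 < q2" unfolding q2_def using q0 by simp
    have q21: "q2 < 1" unfolding q2_def using q1 by simp
    have qq: "q \<le> q2\<^sup>2" unfolding q2_def using q0 q1 by simp
    define K where "K = 8 * (exp 1 / real p) ^ p"
    have K0: "K > 0" unfolding K_def using p1 by simp
    have "(\<lambda>n. (1 + real p) ^ p * q2 ^ n) \<longlonglongrightarrow> (1 + real p) ^ p * 0"
      by (intro tendsto_intros LIMSEQ_power_zero) (use q2p q21 in auto)
    then have "eventually (\<lambda>n. (1 + real p) ^ p * q2 ^ n < K) sequentially"
      using K0 by (intro order_tendstoD(2)) auto
    then obtain N0 where N0: "\<And>n. n \<ge> N0 \<Longrightarrow> (1 + real p) ^ p * q2 ^ n < K"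
      by (auto simp: eventually_sequentially)
    have E1: "eventually (\<lambda>k. (1 + real p) ^ p * q2 ^ (d k - 2) < K \<and> 2 \<le> d k) sequentially"
      using dinf[of "N0 + 2"] by eventually_elim (auto intro!: N0)
    have E2: "eventually (\<lambda>k. q2 \<le> 2 powr (- \<delta> k / D)) sequentially"
    proof -
      have "(\<lambda>k. exp ((- \<delta> k / D) * ln 2)) \<longlonglongrightarrow> exp ((- 0 / D) * ln 2)"
        using D0 by (intro tendsto_intros dlim) auto
      then have "(\<lambda>k. 2 powr (- \<delta> k / D)) \<longlonglongrightarrow> 1" by (simp add: powr_def)
      then have "eventually (\<lambda>k. q2 < 2 powr (- \<delta> k / D)) sequentially"
        using q21 by (intro order_tendstoD(1)) auto
      then show ?thesis by eventually_elim simp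
    qed
    from E1 E2 show ?thesis
    proof eventually_elim
      case (elim k)
      show ?case
      proof (intro allI impI)
        fix x assume xr: "infdist x S \<ge> r"
        obtain N where N: "N \<in> polys_deg (d k)" "N x = 1" "\<forall>y\<in>S. (N y)\<^sup>2 \<le> q ^ (d k - 1)"
          using needle[OF cS Sne r xr, of "d k"] unfolding q_def D_def by blast
        have cu: "christoffel \<mu> (d k) x \<le> q ^ (d k - 1)"
          by (rule christ_upper[OF mu' gm mU N(1,2)]) (use q0 N(3) gnz in auto)
        have "real (sdim p (d k)) * christoffel \<mu> (d k) x \<le> real (sdim p (d k)) * q ^ (d k - 1)"
          using cu by (intro mult_left_mono) auto
        also have "\<dots> < \<alpha> k"
          by (rule numeric_key[OF p1 _ dpos D0 q0 qq q2p]) (use elim dc'[of k] in \<open>auto simp: K_def\<close>)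
        finally show "x \<notin> Sk k" using Sk by auto
      qed
    qed
  qed
  have H1: "eventually (\<lambda>k. \<forall>z\<in>S. \<exists>a\<in>Sk k. dist a z < e) sequentially" if e: "e > 0" for e
  proof (rule compact_eventually[OF cS])
    fix z assume z: "z \<in> S"
    then have "z \<in> closure I" using clI' by simp
    then obtain a where a: "a \<in> I" "dist a z < e / 2"
      using e by (metis closure_approachable half_gt_zero)
    obtain r where r: "r > 0" "ball a r \<subseteq> I" using oI a(1) by (meson openE)
    have ev: "eventually (\<lambda>k. a \<in> Sk k) sequentially"
      using LB[OF r(1)] by eventually_elim (use r in blast)
    show "\<exists>U. open U \<and> z \<in> U \<and> eventually (\<lambda>k. \<forall>y\<in>U. \<exists>a\<in>Sk k. dist a y < e) sequentially"
    proof (intro exI conjI)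
      show "open (ball z (e / 2))" by simp
      show "z \<in> ball z (e / 2)" using e by simp
      show "eventually (\<lambda>k. \<forall>y\<in>ball z (e / 2). \<exists>a\<in>Sk k. dist a y < e) sequentially"
        using ev
      proof eventually_elim
        case (elim k)
        show ?case
        proof
          fix y assume "y \<in> ball z (e / 2)"
          then have "dist a y < e" using a(2) dist_triangle[of a y z] by (simp add: dist_commute)
          then show "\<exists>a\<in>Sk k. dist a y < e" using elim by blast
        qed
      qed
    qed
  qed
  have H2: "eventually (\<lambda>k. \<forall>x\<in>Sk k. infdist x S < e) sequentially" if e: "e > 0" for e
    using UB[OF e] by eventually_elim (auto simp: not_le)
  have bdd1: "bounded {x. infdist x S < 1}" by (rule bounded_infdist_lt[OF clS Sne bS])
  have part1: "(\<lambda>k. hausdorff_dist (Sk k) S) \<longlonglongrightarrow> 0"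
  proof (rule LIMSEQ_I)
    fix e :: real assume e: "e > 0"
    have "eventually (\<lambda>k. norm (hausdorff_dist (Sk k) S - 0) < e) sequentially"
      using H1[OF half_gt_zero[OF e]] H2[OF half_gt_zero[OF e]] H2[OF zero_less_one]
    proof eventually_elim
      case (elim k)
      have ne: "Sk k \<noteq> {}" using elim(1) Sne by blast
      have bd: "bounded (Sk k)" using elim(3) by (intro bounded_subset[OF bdd1]) auto
      have "\<bar>hausdorff_dist (Sk k) S\<bar> \<le> e / 2"
      proof (rule hausdorff_le[OF ne bd Sne bS])
        fix x assume "x \<in> Sk k" then show "infdist x S \<le> e / 2" using elim(2) by (auto intro: less_imp_le)
      next
        fix z assume "z \<in> S"
        then obtain a where "a \<in> Sk k" "dist a z < e / 2" using elim(1) by blast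
        then show "infdist z (Sk k) \<le> e / 2" by (intro infdist_le2) (auto simp: dist_commute)
      qed
      then show ?case using e by simp
    qed
    then show "\<exists>no. \<forall>k\<ge>no. norm (hausdorff_dist (Sk k) S - 0) < e"
      by (simp add: eventually_sequentially)
  qed
  have FSne: "frontier S \<noteq> {}"
  proof -
    have "S \<noteq> UNIV"
    proof
      assume "S = UNIV"
      then have "bounded (UNIV :: (real^'n) set)" using bS by simp
      then show False by simp
    qed
    then show ?thesis by (rule frontier_not_empty[OF Sne])
  qed
  have cFS: "compact (frontier S)" using cS by (simp add: compact_frontier)
  have bFS: "bounded (frontier S)" using cFS by (rule compact_imp_bounded)
  have H3: "eventually (\<lambda>k. \<forall>y\<in>frontier (Sk k). infdist y (frontier S) < e) sequentially" if e: "e > 0" for e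
    using H2[OF half_gt_zero[OF e]] LB[OF half_gt_zero[OF e]]
  proof eventually_elim
    case (elim k)
    show ?case
    proof
      fix y assume yf: "y \<in> frontier (Sk k)"
      show "infdist y (frontier S) < e"
        by (rule frontier_near1[OF clS Sne FSne e _ _ yf]) (use elim in \<open>auto simp: I_def\<close>)
    qed
  qed
  have H4: "eventually (\<lambda>k. \<forall>z\<in>frontier S. \<exists>y\<in>frontier (Sk k). dist y z < e) sequentially" if e: "e > 0" for e
  proof (rule compact_eventually[OF cFS])
    fix z assume z: "z \<in> frontier S"
    then have "z \<in> closure I" using clI' clS by (simp add: frontier_def)
    then obtain a where a: "a \<in> I" "dist a z < e / 4"
      using e by (metis closure_approachable zero_less_divide_iff zero_less_numeral)
    obtain r where r: "r > 0" "ball a r \<subseteq> I" using oI a(1) by (meson openE)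
    have eva: "eventually (\<lambda>k. a \<in> Sk k) sequentially"
      using LB[OF r(1)] by eventually_elim (use r in blast)
    have "z \<in> closure (- S)" using z by (simp add: frontier_def closure_complement)
    then obtain c where c: "c \<in> - S" "dist c z < e / 4"
      using e by (metis closure_approachable zero_less_divide_iff zero_less_numeral)
    have cpos: "infdist c S > 0" using c(1) by (intro infdist_pos_not_in_closed[OF clS Sne]) auto
    have evc: "eventually (\<lambda>k. c \<notin> Sk k) sequentially"
      using UB[OF cpos] by eventually_elim auto
    show "\<exists>U. open U \<and> z \<in> U \<and> eventually (\<lambda>k. \<forall>y\<in>U. \<exists>v\<in>frontier (Sk k). dist v y < e) sequentially"
    proof (intro exI conjI)
      show "open (ball z (e / 2))" by simp
      show "z \<in> ball z (e / 2)" using e by simp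
      show "eventually (\<lambda>k. \<forall>y\<in>ball z (e / 2). \<exists>v\<in>frontier (Sk k). dist v y < e) sequentially"
        using eva evc
      proof eventually_elim
        case (elim k)
        obtain v where v: "v \<in> frontier (Sk k)" "dist v z < e / 4"
          using frontier_near2[of a "Sk k" z "e/4" c] elim a(2) c(2) by blast
        show ?case
        proof
          fix y assume "y \<in> ball z (e / 2)"
          then have "dist z y < e / 2" by simp
          moreover have "dist v y \<le> dist v z + dist z y" by (rule dist_triangle)
          ultimately have "dist v y < e" using v(2) e by linarith
          then show "\<exists>v\<in>frontier (Sk k). dist v y < e" using v(1) by blast
        qed
      qed
    qed
  qed
  have part2: "(\<lambda>k. hausdorff_dist (frontier (Sk k)) (frontier S)) \<longlonglongrightarrow> 0"
  proof (rule LIMSEQ_I)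
    fix e :: real assume e: "e > 0"
    have "eventually (\<lambda>k. norm (hausdorff_dist (frontier (Sk k)) (frontier S) - 0) < e) sequentially"
      using H4[OF half_gt_zero[OF e]] H3[OF half_gt_zero[OF e]] H2[OF zero_less_one]
    proof eventually_elim
      case (elim k)
      have ne: "frontier (Sk k) \<noteq> {}" using elim(1) FSne by blast
      have bd0: "bounded (Sk k)" using elim(3) by (intro bounded_subset[OF bdd1]) auto
      have bd: "bounded (frontier (Sk k))"
        using bounded_closure[OF bd0] by (rule bounded_subset) (simp add: frontier_def)
      have "\<bar>hausdorff_dist (frontier (Sk k)) (frontier S)\<bar> \<le> e / 2"
      proof (rule hausdorff_le[OF ne bd FSne bFS])
        fix x assume "x \<in> frontier (Sk k)" then show "infdist x (frontier S) \<le> e / 2"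
          using elim(2) by (auto intro: less_imp_le)
      next
        fix z assume "z \<in> frontier S"
        then obtain a where "a \<in> frontier (Sk k)" "dist a z < e / 2" using elim(1) by blast
        then show "infdist z (frontier (Sk k)) \<le> e / 2" by (intro infdist_le2) (auto simp: dist_commute)
      qed
      then show ?case using e by simp
    qed
    then show "\<exists>no. \<forall>k\<ge>no. norm (hausdorff_dist (frontier (Sk k)) (frontier S) - 0) < e"
      by (simp add: eventually_sequentially)
  qed
  show ?thesis using part1 part2 by simp
qed

end
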